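(* For the DSF process on $K_{N+1}$ started with $m_0=m_0(N)$ empty vertices with $m_0(N)\to\infty$, the halting time $T_N$ and the last-step duration $t_N$ satisfy, for every integer $p\ge1$, $$\lim_{N\to\infty}\frac{\mathbb{E}[T_N\,t_N^p]}{N^{p+1}}=p!\,\frac{\pi^2}{6}+p\cdot p!,\qquad \lim_{N\to\infty}\frac{\mathbb{E}[T_N]\,\mathbb{E}[t_N^p]}{N^{p+1}}=p!\,\frac{\pi^2}{6}.$$ In particular $\mathbb{E}[T_Nt_N]/N^2\to\frac{\pi^2}{6}+1$, so $T_N$ and $t_N$ are positively correlated.
   Context: Dynamic space filling (DSF) on the complete graph $K_{N+1}$ (vertex set of size $N+1$, every two distinct vertices adjacent): there are $N+1$ particles distributed among the $N+1$ vertices. The particles at a vertex form a pile ordered by arrival time; a particle arriving at a vertex is placed on top of the pile. The bottom particle of each nonempty pile never moves. Every other particle independently jumps, at total rate $1$, to one of the $N$ other vertices chosen uniformly at random (rate $1/N$ to each). A vertex is empty if it holds no particle. The halting time $T_N$ is the first time at which every vertex holds exactly one particle; the duration $t_N$ of the last step is the length of the time interval during which exactly one vertex is empty. *)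

theory Defs
  imports "HOL-Probability.Probability"
begin

text \<open>Dynamic space filling on the complete graph K_(N+1).
  Vertices are 0..N, particles are 0..N.  A configuration maps each vertex
  to its pile, a list of particles with the top (most recently arrived)
  particle at the head and the bottom particle as the last element.\<close>

type_synonym dsf_config = "nat \<Rightarrow> nat list"

definition dsf_valid :: "nat \<Rightarrow> dsf_config \<Rightarrow> bool" where
  "dsf_valid N c \<longleftrightarrow>
     distinct (concat (map c [0..<N+1])) \<and> set (concat (map c [0..<N+1])) = {0..N}
     \<and> (\<forall>v>N. c v = [])"

definition dsf_empty_count :: "nat \<Rightarrow> dsf_config \<Rightarrow> nat" where
  "dsf_empty_count N c = card {v. v \<le> N \<and> c v = []}"

definition dsf_halted :: "nat \<Rightarrow> dsf_config \<Rightarrow> bool" where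
  "dsf_halted N c \<longleftrightarrow> (\<forall>v\<le>N. length (c v) = 1)"

text \<open>One ring of the clock of particle i with offset off (1 \<le> off \<le> N):
  if i is not the bottom particle of its pile at vertex v, it leaves its pile
  and is put on top of the pile at vertex (v + off) mod (N+1), a uniformly
  chosen other vertex when off is uniform on {1..N}.\<close>
definition dsf_step :: "nat \<Rightarrow> dsf_config \<Rightarrow> nat \<times> nat \<Rightarrow> dsf_config" where
  "dsf_step N c ch =
     (let i = fst ch; off = snd ch in
      if \<exists>v\<le>N. i \<in> set (c v) \<and> i \<noteq> last (c v) then
        (let v = (LEAST v. i \<in> set (c v));
             w = (v + off) mod (N + 1);
             c' = c(v := remove1 i (c v))
         in c'(w := i # c' w))
      else c)"

text \<open>Construction of the continuous-time process: each of the N+1 particles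
  carries an independent rate-1 Poisson clock; their superposition is a rate
  N+1 Poisson clock whose rings are marked by a uniformly chosen particle.
  The sample point omega gives, for the k-th ring, the exponential waiting
  time fst (omega k) since the previous ring and the mark
  snd (omega k) = (particle, offset of destination).\<close>
definition dsf_step_measure :: "nat \<Rightarrow> (real \<times> (nat \<times> nat)) measure" where
  "dsf_step_measure N =
     density lborel (exponential_density (real N + 1))
     \<Otimes>\<^sub>M measure_pmf (pmf_of_set ({0..N} \<times> {1..N}))"

definition dsf_space :: "nat \<Rightarrow> (nat \<Rightarrow> real \<times> (nat \<times> nat)) measure" where
  "dsf_space N = Pi\<^sub>M UNIV (\<lambda>_. dsf_step_measure N)"

text \<open>Configuration after k rings (i.e. during the k-th holding interval).\<close>
fun dsf_conf :: "nat \<Rightarrow> dsf_config \<Rightarrow> (nat \<Rightarrow> real \<times> (nat \<times> nat)) \<Rightarrow> nat \<Rightarrow> dsf_config" where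
  "dsf_conf N c \<omega> 0 = c"
| "dsf_conf N c \<omega> (Suc k) = dsf_step N (dsf_conf N c \<omega> k) (snd (\<omega> k))"

definition dsf_halt_index :: "nat \<Rightarrow> dsf_config \<Rightarrow> (nat \<Rightarrow> real \<times> (nat \<times> nat)) \<Rightarrow> nat" where
  "dsf_halt_index N c \<omega> = (LEAST k. dsf_halted N (dsf_conf N c \<omega> k))"

definition dsf_T :: "nat \<Rightarrow> dsf_config \<Rightarrow> (nat \<Rightarrow> real \<times> (nat \<times> nat)) \<Rightarrow> real" where
  "dsf_T N c \<omega> = (\<Sum>k<dsf_halt_index N c \<omega>. fst (\<omega> k))"

definition dsf_t :: "nat \<Rightarrow> dsf_config \<Rightarrow> (nat \<Rightarrow> real \<times> (nat \<times> nat)) \<Rightarrow> real" where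
  "dsf_t N c \<omega> = (\<Sum>k<dsf_halt_index N c \<omega>.
      if dsf_empty_count N (dsf_conf N c \<omega> k) = 1 then fst (\<omega> k) else 0)"

end

theory Submission
  imports Defs
begin


definition pms :: "nat \<Rightarrow> dsf_config \<Rightarrow> nat multiset" where
  "pms N c = (\<Sum>v\<in>{0..N}. mset (c v))"

lemma valid_iff: "dsf_valid N c \<longleftrightarrow> pms N c = mset_set {0..N} \<and> (\<forall>v>N. c v = [])"
proof -
  have e: "mset (concat (map c [0..<N+1])) = pms N c"
    by (simp add: mset_concat pms_def comp_def interv_sum_list_conv_sum_set_nat atLeastLessThanSuc_atLeastAtMost del: upt_Suc)
  have u: "mset [0..<N+1] = mset_set {0..N}"
    by (simp add: mset_upt atLeastLessThanSuc_atLeastAtMost del: upt_Suc)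
  have "distinct xs \<and> set xs = {0..N} \<longleftrightarrow> mset xs = mset_set {0..N}" for xs :: "nat list"
  proof
    assume H: "distinct xs \<and> set xs = {0..N}"
    have s: "set [0..<N+1] = {0..N}" by (simp only: set_upt atLeastLessThanSuc_atLeastAtMost Suc_eq_plus1[symmetric])
    have d: "distinct [0..<N+1]" by (simp only: distinct_upt)
    have "(set xs = set [0..<N+1]) = (mset xs = mset [0..<N+1])"
      using H d by (intro set_eq_iff_mset_eq_distinct) auto
    then show "mset xs = mset_set {0..N}" using H s u by simp
  next
    assume a: "mset xs = mset_set {0..N}"
    then have "mset xs = mset [0..<N+1]" using u by simp
    then show "distinct xs \<and> set xs = {0..N}"
      using mset_eq_imp_distinct_iff mset_eq_setD by fastforce
  qed
  then show ?thesis unfolding dsf_valid_def using e by metis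
qed

lemma valid_count:
  assumes "dsf_valid N c"
  shows "(\<Sum>v\<in>{0..N}. count (mset (c v)) i) = (if i \<le> N then 1 else 0)"
proof -
  have "count (pms N c) i = (if i \<le> N then 1 else 0)" using assms valid_iff by auto
  then show ?thesis by (simp add: pms_def count_sum)
qed

lemma valid_big: "dsf_valid N c \<Longrightarrow> v > N \<Longrightarrow> c v = []"
  using valid_iff by auto

lemma valid_count_le:
  assumes "dsf_valid N c"
  shows "count (mset (c v)) i \<le> (if i \<le> N then 1 else 0)"
proof (cases "v \<le> N")
  case True
  have "count (mset (c v)) i \<le> (\<Sum>v\<in>{0..N}. count (mset (c v)) i)"
    using True by (intro member_le_sum) auto
  then show ?thesis using valid_count[OF assms] by simp
next
  case False then show ?thesis using valid_big[OF assms] by simp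
qed

lemma valid_le: "dsf_valid N c \<Longrightarrow> i \<in> set (c v) \<Longrightarrow> i \<le> N"
  using valid_count_le[of N c v i] by (metis count_mset_0_iff not_one_le_zero le_zero_eq)

lemma valid_vle: "dsf_valid N c \<Longrightarrow> i \<in> set (c v) \<Longrightarrow> v \<le> N"
  by (metis valid_big empty_iff empty_set not_le)

lemma valid_distinct: "dsf_valid N c \<Longrightarrow> distinct (c v)"
  unfolding distinct_count_atmost_1
proof
  fix a assume a: "dsf_valid N c"
  have "count (mset (c v)) a \<le> (if a \<le> N then 1 else 0)" using valid_count_le[OF a, of v a] .
  moreover have "(if a \<le> N then 1 else 0) \<le> (1::nat)" by simp
  ultimately have "count (mset (c v)) a \<le> 1" by linarith
  then show "count (mset (c v)) a = (if a \<in> set (c v) then 1 else 0)"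
    by (metis count_mset_0_iff le_antisym not_one_le_zero linorder_not_le less_one)
qed

lemma valid_unique:
  assumes "dsf_valid N c" "i \<in> set (c v)" "i \<in> set (c u)"
  shows "u = v"
proof (rule ccontr)
  assume ne: "u \<noteq> v"
  have vN: "v \<le> N" "u \<le> N" using assms valid_vle by auto
  have "(\<Sum>x\<in>{u,v}. count (mset (c x)) i) \<le> (\<Sum>x\<in>{0..N}. count (mset (c x)) i)"
    using vN by (intro sum_mono2) auto
  moreover have "(\<Sum>x\<in>{u,v}. count (mset (c x)) i) \<ge> 2"
  proof -
    have "count (mset (c u)) i \<ge> 1" "count (mset (c v)) i \<ge> 1"
      using assms(2,3) by simp_all
    moreover have "(\<Sum>x\<in>{u,v}. count (mset (c x)) i) = count (mset (c u)) i + count (mset (c v)) i"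
      using ne by simp
    ultimately show ?thesis by linarith
  qed
  ultimately show False using valid_count[OF assms(1), of i] by (auto split: if_splits)
qed

lemma valid_len:
  assumes "dsf_valid N c"
  shows "(\<Sum>v\<in>{0..N}. length (c v)) = N + 1"
proof -
  have "size (pms N c) = N + 1" using assms valid_iff by auto
  then show ?thesis by (simp add: pms_def size_multiset_sum)
qed

definition own :: "dsf_config \<Rightarrow> nat \<Rightarrow> nat" where
  "own c i = (LEAST v. i \<in> set (c v))"

lemma own_eq: "dsf_valid N c \<Longrightarrow> i \<in> set (c v) \<Longrightarrow> own c i = v"
  unfolding own_def
  by (rule Least_equality) (auto dest: valid_unique)

definition movable :: "nat \<Rightarrow> dsf_config \<Rightarrow> nat \<Rightarrow> bool" where
  "movable N c i \<longleftrightarrow> (\<exists>v\<le>N. i \<in> set (c v) \<and> i \<noteq> last (c v))"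

lemma mod_ne: "(v::nat) \<le> N \<Longrightarrow> 1 \<le> off \<Longrightarrow> off \<le> N \<Longrightarrow> (v + off) mod (N+1) \<noteq> v"
proof
  assume a: "v \<le> N" "1 \<le> off" "off \<le> N" "(v + off) mod (N+1) = v"
  show False
  proof (cases "v + off < N + 1")
    case True
    then have "(v + off) mod (N+1) = v + off" using mod_less by simp
    then show False using a by linarith
  next
    case False
    then have "(v + off) mod (N+1) = v + off - (N+1)" using a
      by (simp add: le_mod_geq)
    then show False using a False by linarith
  qed
qed

lemma step_eq: "dsf_step N c (i, off) = (if movable N c i then
   (c(own c i := remove1 i (c (own c i))))((own c i + off) mod (N+1) := i # (c(own c i := remove1 i (c (own c i)))) ((own c i + off) mod (N+1)))
   else c)"
  unfolding dsf_step_def movable_def own_def Let_def fst_conv snd_conv ..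

lemma step_nonmov: "\<not> movable N c i \<Longrightarrow> dsf_step N c (i, off) = c"
  by (simp add: step_eq)

lemma step_mov_gen:
  assumes "dsf_valid N c" "i \<in> set (c v)" "i \<noteq> last (c v)"
  shows "dsf_step N c (i, off) =
     (c(v := remove1 i (c v)))((v + off) mod (N+1) := i # (c(v := remove1 i (c v))) ((v + off) mod (N+1)))"
proof -
  have v: "v \<le> N" using assms valid_vle by auto
  have o: "own c i = v" using own_eq assms by auto
  have m: "movable N c i" unfolding movable_def using v assms by auto
  show ?thesis unfolding step_eq o using m by simp
qed

lemma step_mov:
  assumes "dsf_valid N c" "i \<in> set (c v)" "i \<noteq> last (c v)" "(v + off) mod (N+1) \<noteq> v"
  shows "dsf_step N c (i, off) =
     (c(v := remove1 i (c v)))((v + off) mod (N+1) := i # c ((v + off) mod (N+1)))"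
  unfolding step_mov_gen[OF assms(1-3)] using assms(4) by simp

lemma step_mov_same:
  assumes "dsf_valid N c" "i \<in> set (c v)" "i \<noteq> last (c v)" "(v + off) mod (N+1) = v"
  shows "dsf_step N c (i, off) = c(v := i # remove1 i (c v))"
  unfolding step_mov_gen[OF assms(1-3)] using assms(4) by simp

lemma remove1_ne: "i \<in> set xs \<Longrightarrow> i \<noteq> last xs \<Longrightarrow> remove1 i xs \<noteq> []"
  by (cases xs) (auto split: if_splits)

lemma valid_step:
  assumes c: "dsf_valid N c"
  shows "dsf_valid N (dsf_step N c (i, off))"
proof (cases "movable N c i")
  case False then show ?thesis using c step_nonmov by simp
next
  case True
  then obtain v where v: "v \<le> N" "i \<in> set (c v)" "i \<noteq> last (c v)" unfolding movable_def by auto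
  define w where "w = (v + off) mod (N+1)"
  have wN: "w \<le> N" unfolding w_def by simp
  have split1: "sum f {0..N} = f v + sum f ({0..N} - {v})" for f :: "nat \<Rightarrow> nat multiset"
    using v(1) by (intro sum.remove) auto
  show ?thesis
  proof (cases "w = v")
    case True
    define c'' where "c'' = c(v := i # remove1 i (c v))"
    have st: "dsf_step N c (i, off) = c''" unfolding c''_def
      by (rule step_mov_same[OF c v(2,3)]) (use True w_def in simp)
    have big: "\<forall>u>N. c'' u = []"
    proof (intro allI impI)
      fix u assume u: "u > N"
      then have "u \<noteq> v" using v by auto
      then show "c'' u = []" unfolding c''_def using valid_big[OF c u] by simp
    qed
    have r: "(\<Sum>u\<in>{0..N} - {v}. mset (c'' u)) = (\<Sum>u\<in>{0..N} - {v}. mset (c u))"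
      by (rule sum.cong) (auto simp: c''_def)
    have "pms N c'' = pms N c"
      unfolding pms_def split1[of "\<lambda>u. mset (c'' u)"] split1[of "\<lambda>u. mset (c u)"] r
      using v(2) by (simp add: c''_def insert_DiffM)
    then show ?thesis using st big c valid_iff by auto
  next
    case False
    then have wv: "w \<noteq> v" .
    define c'' where "c'' = (c(v := remove1 i (c v)))(w := i # c w)"
    have st: "dsf_step N c (i, off) = c''" unfolding c''_def w_def
      by (rule step_mov[OF c v(2,3)]) (use wv w_def in simp)
    have big: "\<forall>u>N. c'' u = []"
    proof (intro allI impI)
      fix u assume u: "u > N"
      then have "u \<noteq> v" "u \<noteq> w" using v wN by auto
      then show "c'' u = []" unfolding c''_def using valid_big[OF c u] by simp
    qed
    have split: "sum f {0..N} = f v + (f w + sum f ({0..N} - {v} - {w}))" for f :: "nat \<Rightarrow> nat multiset"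
    proof -
      have "sum f ({0..N} - {v}) = f w + sum f ({0..N} - {v} - {w})" using wN wv by (intro sum.remove) auto
      then show ?thesis using split1 by simp
    qed
    have r: "(\<Sum>u\<in>{0..N} - {v} - {w}. mset (c'' u)) = (\<Sum>u\<in>{0..N} - {v} - {w}. mset (c u))"
      by (rule sum.cong) (auto simp: c''_def)
    have c1: "c'' v = remove1 i (c v)" "c'' w = i # c w" using wv by (simp_all add: c''_def)
    have "pms N c'' = pms N c"
      unfolding pms_def split[of "\<lambda>u. mset (c'' u)"] split[of "\<lambda>u. mset (c u)"] r c1
      using v(2) by (simp add: insert_DiffM)
    then show ?thesis using st big c valid_iff by auto
  qed
qed

lemma valid_step': "dsf_valid N c \<Longrightarrow> dsf_valid N (dsf_step N c mk)"
  using valid_step[of N c "fst mk" "snd mk"] by simp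


lemma card_part: "card {v\<in>{0..N}. c v \<noteq> []} + dsf_empty_count N c = N + 1"
proof -
  have "card ({v\<in>{0..N}. c v \<noteq> []} \<union> {v. v \<le> N \<and> c v = []}) = card {v\<in>{0..N}. c v \<noteq> []} + card {v. v \<le> N \<and> c v = []}"
    by (rule card_Un_disjoint) auto
  moreover have "{v\<in>{0..N}. c v \<noteq> []} \<union> {v. v \<le> N \<and> c v = []} = {0..N}" by auto
  ultimately show ?thesis unfolding dsf_empty_count_def by simp
qed

lemma sum_len_minus:
  assumes "dsf_valid N c"
  shows "(\<Sum>v\<in>{0..N}. length (c v) - 1) + card {v\<in>{0..N}. c v \<noteq> []} = N + 1"
proof -
  have "card {v\<in>{0..N}. c v \<noteq> []} = (\<Sum>v\<in>{0..N}. if c v \<noteq> [] then 1 else 0)"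
    by (simp add: sum.inter_filter[symmetric])
  then have "(\<Sum>v\<in>{0..N}. length (c v) - 1) + card {v\<in>{0..N}. c v \<noteq> []}
      = (\<Sum>v\<in>{0..N}. (length (c v) - 1) + (if c v \<noteq> [] then 1 else 0))"
    by (simp add: sum.distrib)
  also have "\<dots> = (\<Sum>v\<in>{0..N}. length (c v))"
    by (rule sum.cong) auto
  finally show ?thesis using valid_len[OF assms] by simp
qed

lemma em_le:
  assumes "dsf_valid N c"
  shows "dsf_empty_count N c \<le> N"
proof -
  have "card {v\<in>{0..N}. c v \<noteq> []} \<noteq> 0"
  proof
    assume "card {v\<in>{0..N}. c v \<noteq> []} = 0"
    then have "\<forall>v\<in>{0..N}. c v = []" by auto
    then have "(\<Sum>v\<in>{0..N}. length (c v)) = 0" by simp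
    then show False using valid_len[OF assms] by simp
  qed
  then show ?thesis using card_part[of N c] by linarith
qed

lemma halted_iff:
  assumes "dsf_valid N c"
  shows "dsf_halted N c \<longleftrightarrow> dsf_empty_count N c = 0"
proof
  assume "dsf_halted N c"
  then have "{v. v \<le> N \<and> c v = []} = {}" unfolding dsf_halted_def by fastforce
  then show "dsf_empty_count N c = 0" unfolding dsf_empty_count_def by simp
next
  assume "dsf_empty_count N c = 0"
  then have e: "{v. v \<le> N \<and> c v = []} = {}" unfolding dsf_empty_count_def by simp
  then have ne: "{v\<in>{0..N}. c v \<noteq> []} = {0..N}" by auto
  have "(\<Sum>v\<in>{0..N}. length (c v) - 1) = 0"
    using sum_len_minus[OF assms] ne by simp
  then have "\<forall>v\<in>{0..N}. length (c v) - 1 = 0" by simp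
  then show "dsf_halted N c" unfolding dsf_halted_def using e
    by (metis (mono_tags, lifting) Suc_pred' atLeastAtMost_iff bot_nat_0.extremum empty_Collect_eq
        length_greater_0_conv One_nat_def diff_Suc_1)
qed

lemma mov_set: "{i. movable N c i} = (\<Union>v\<in>{0..N}. set (c v) - {last (c v)})"
  unfolding movable_def by auto

lemma card_mov:
  assumes c: "dsf_valid N c"
  shows "card {i. movable N c i} = dsf_empty_count N c"
proof -
  have "card {i. movable N c i} = (\<Sum>v\<in>{0..N}. card (set (c v) - {last (c v)}))"
    unfolding mov_set
    by (rule card_UN_disjoint) (auto dest: valid_unique[OF c])
  also have "\<dots> = (\<Sum>v\<in>{0..N}. length (c v) - 1)"
  proof (rule sum.cong)
    fix v assume "v \<in> {0..N}"
    show "card (set (c v) - {last (c v)}) = length (c v) - 1"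
    proof (cases "c v = []")
      case True then show ?thesis by simp
    next
      case False
      then show ?thesis using valid_distinct[OF c, of v]
        by (simp add: card_Diff_singleton distinct_card)
    qed
  qed simp
  finally show ?thesis using sum_len_minus[OF c] card_part[of N c] by linarith
qed

definition dropset :: "nat \<Rightarrow> dsf_config \<Rightarrow> (nat \<times> nat) set" where
  "dropset N c = {(i, off). 1 \<le> off \<and> off \<le> N \<and> movable N c i \<and> c ((own c i + off) mod (N+1)) = []}"

lemma em_step:
  assumes c: "dsf_valid N c" and o: "1 \<le> off" "off \<le> N"
  shows "dsf_empty_count N (dsf_step N c (i, off)) =
     (if (i, off) \<in> dropset N c then dsf_empty_count N c - 1 else dsf_empty_count N c)"
proof (cases "movable N c i")
  case False then show ?thesis using step_nonmov by (simp add: dropset_def)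
next
  case True
  then obtain v where v: "v \<le> N" "i \<in> set (c v)" "i \<noteq> last (c v)" unfolding movable_def by auto
  have ov: "own c i = v" using own_eq[OF c v(2)] .
  define w where "w = (v + off) mod (N+1)"
  have wN: "w \<le> N" unfolding w_def by simp
  have wv: "w \<noteq> v" unfolding w_def using mod_ne[OF v(1) o] .
  define c'' where "c'' = (c(v := remove1 i (c v)))(w := i # c w)"
  have st: "dsf_step N c (i, off) = c''" unfolding c''_def w_def
    by (rule step_mov[OF c v(2,3)]) (use wv w_def in simp)
  have rne: "remove1 i (c v) \<noteq> []" using remove1_ne[OF v(2,3)] .
  have cv: "c v \<noteq> []" using v by auto
  have E: "{u. u \<le> N \<and> c'' u = []} = {u. u \<le> N \<and> c u = []} - {w}"
    using rne cv wv unfolding c''_def by auto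
  have d: "(i, off) \<in> dropset N c \<longleftrightarrow> c w = []"
    unfolding dropset_def w_def using True o ov by auto
  show ?thesis unfolding st dsf_empty_count_def E d using wN
    by (simp add: card_Diff_singleton_if)
qed

lemma em_step_le:
  assumes c: "dsf_valid N c" and o: "1 \<le> off" "off \<le> N"
  shows "dsf_empty_count N (dsf_step N c (i, off)) \<le> dsf_empty_count N c"
  using em_step[OF assms] by simp

lemma em_le_any:
  assumes c: "dsf_valid N c"
  shows "dsf_empty_count N (dsf_step N c (i, off)) \<le> dsf_empty_count N c"
proof (cases "movable N c i")
  case False then show ?thesis using step_nonmov by simp
next
  case True
  then obtain v where v: "v \<le> N" "i \<in> set (c v)" "i \<noteq> last (c v)" unfolding movable_def by auto
  define w where "w = (v + off) mod (N+1)"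
  have cv: "c v \<noteq> []" using v by auto
  show ?thesis
  proof (cases "w = v")
    case True
    have st: "dsf_step N c (i, off) = c(v := i # remove1 i (c v))"
      by (rule step_mov_same[OF c v(2,3)]) (use True w_def in simp)
    have "{u. u \<le> N \<and> (c(v := i # remove1 i (c v))) u = []} = {u. u \<le> N \<and> c u = []}"
      using cv by auto
    then show ?thesis unfolding st dsf_empty_count_def by simp
  next
    case False
    have st: "dsf_step N c (i, off) = (c(v := remove1 i (c v)))(w := i # c w)" unfolding w_def
      by (rule step_mov[OF c v(2,3)]) (use False w_def in simp)
    have rne: "remove1 i (c v) \<noteq> []" using remove1_ne[OF v(2,3)] .
    have "{u. u \<le> N \<and> ((c(v := remove1 i (c v)))(w := i # c w)) u = []} \<subseteq> {u. u \<le> N \<and> c u = []}"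
      using rne cv False by auto
    then show ?thesis unfolding st dsf_empty_count_def by (intro card_mono) auto
  qed
qed

lemma em_le_any': "dsf_valid N c \<Longrightarrow> dsf_empty_count N (dsf_step N c mk) \<le> dsf_empty_count N c"
  using em_le_any[of N c "fst mk" "snd mk"] by simp

lemma mod_small: "(x::nat) < 2*(N+1) \<Longrightarrow> x mod (N+1) = (if x < N+1 then x else x - (N+1))"
proof (cases "x < N + 1")
  case True then show ?thesis using mod_less by simp
next
  case False
  assume x: "x < 2*(N+1)"
  then have "x mod (N+1) = (x - (N+1)) mod (N+1)" using False by (simp add: le_mod_geq)
  also have "\<dots> = x - (N+1)" by (intro mod_less) (use x False in arith)
  finally show ?thesis using False by simp
qed

lemma mod_inj:
  assumes "(v::nat) \<le> N" "1 \<le> a" "a \<le> N" "1 \<le> b" "b \<le> N" "(v + a) mod (N+1) = (v + b) mod (N+1)"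
  shows "a = b"
proof -
  have "v + a < 2*(N+1)" "v + b < 2*(N+1)" using assms by simp_all
  then show ?thesis using assms(6) mod_small[of "v+a" N] mod_small[of "v+b" N] assms(1-5)
    by (auto split: if_splits)
qed

lemma card_offs:
  assumes c: "dsf_valid N c" and v: "v \<le> N" "c v \<noteq> []"
  shows "card {off. 1 \<le> off \<and> off \<le> N \<and> c ((v + off) mod (N+1)) = []} = dsf_empty_count N c"
proof -
  let ?S = "{off. 1 \<le> off \<and> off \<le> N \<and> c ((v + off) mod (N+1)) = []}"
  let ?f = "\<lambda>off. (v + off) mod (N+1)"
  have inj: "inj_on ?f ?S"
    by (rule inj_onI) (use mod_inj[OF v(1)] in auto)
  have img: "?f ` ?S = {u. u \<le> N \<and> c u = []}"
  proof
    show "?f ` ?S \<subseteq> {u. u \<le> N \<and> c u = []}" by auto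
  next
    show "{u. u \<le> N \<and> c u = []} \<subseteq> ?f ` ?S"
    proof
      fix u assume u: "u \<in> {u. u \<le> N \<and> c u = []}"
      then have uv: "u \<noteq> v" using v by auto
      define off where "off = (if v < u then u - v else u + N + 1 - v)"
      have o: "1 \<le> off" "off \<le> N" unfolding off_def using uv u v by auto
      have fo: "?f off = u"
      proof (cases "v < u")
        case True then show ?thesis unfolding off_def using u by simp
      next
        case False
        then have "v + off = u + (N + 1)" unfolding off_def using uv v(1) by simp
        moreover have "(u + (N+1)) mod (N+1) = u mod (N+1)" by (rule mod_add_self2)
        moreover have "u mod (N+1) = u" using u mod_less by auto
        ultimately show ?thesis by simp
      qed
      show "u \<in> ?f ` ?S" using o fo u by (intro image_eqI[of _ _ off]) auto
    qed
  qed
  have "card ?S = card (?f ` ?S)" using card_image[OF inj] by simp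
  then show ?thesis unfolding img dsf_empty_count_def by simp
qed

lemma card_drop:
  assumes c: "dsf_valid N c"
  shows "card (dropset N c) = (dsf_empty_count N c)^2"
proof -
  have fm: "finite {i. movable N c i}"
  proof -
    have "{i. movable N c i} \<subseteq> {0..N}" unfolding movable_def using valid_le[OF c] by auto
    then show ?thesis using finite_subset by blast
  qed
  have "dropset N c = Sigma {i. movable N c i} (\<lambda>i. {off. 1 \<le> off \<and> off \<le> N \<and> c ((own c i + off) mod (N+1)) = []})"
    unfolding dropset_def by auto
  then have "card (dropset N c) = (\<Sum>i\<in>{i. movable N c i}. card {off. 1 \<le> off \<and> off \<le> N \<and> c ((own c i + off) mod (N+1)) = []})"
    using fm by (simp add: card_SigmaI)
  also have "\<dots> = (\<Sum>i\<in>{i. movable N c i}. dsf_empty_count N c)"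
  proof (rule sum.cong)
    fix i assume "i \<in> {i. movable N c i}"
    then obtain v where v: "v \<le> N" "i \<in> set (c v)" unfolding movable_def by auto
    then have "own c i = v" using own_eq[OF c] by auto
    moreover have "c v \<noteq> []" using v by auto
    ultimately show "card {off. 1 \<le> off \<and> off \<le> N \<and> c ((own c i + off) mod (N+1)) = []} = dsf_empty_count N c"
      using card_offs[OF c v(1)] by simp
  qed simp
  also have "\<dots> = (dsf_empty_count N c)^2" using card_mov[OF c] by (simp add: power2_eq_square)
  finally show ?thesis .
qed

lemma dropset_sub: "dropset N c \<subseteq> {0..N} \<times> {1..N}" if "dsf_valid N c"
  unfolding dropset_def movable_def using valid_le[OF that] by auto


definition Q :: "nat \<Rightarrow> real" where "Q N = real N * (real N + 1)"
definition mu :: "nat \<Rightarrow> nat \<Rightarrow> real" where "mu N i = fact i / (real N + 1) ^ i"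
definition avg :: "nat \<Rightarrow> (nat \<Rightarrow> real) \<Rightarrow> nat \<Rightarrow> real" where
  "avg N g m = ((real m)^2 * g (m - 1) + (Q N - (real m)^2) * g m) / Q N"

fun vv :: "nat \<Rightarrow> nat \<Rightarrow> nat \<Rightarrow> nat \<Rightarrow> real" where
  "vv N 0 j m = (if j = 0 then 1 else 0)"
| "vv N (Suc n) j m = (if m = 0 then (if j = 0 then 1 else 0)
     else if m = 1 then (\<Sum>i\<le>j. real (j choose i) * mu N i * avg N (vv N n (j - i)) 1)
     else avg N (vv N n j) m)"

fun ww :: "nat \<Rightarrow> nat \<Rightarrow> nat \<Rightarrow> nat \<Rightarrow> real" where
  "ww N 0 j m = 0"
| "ww N (Suc n) j m = (if m = 0 then 0 else if m = 1 then vv N (Suc n) (j + 1) 1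
     else mu N 1 * avg N (vv N n j) m + avg N (ww N n j) m)"

definition Hs :: "nat \<Rightarrow> real" where "Hs m = (\<Sum>k<m. 1 / (real k + 1)^2)"
definition BB :: "nat \<Rightarrow> nat \<Rightarrow> real" where "BB N m = Q N * Hs m"

lemma Q_pos: "N \<ge> 1 \<Longrightarrow> Q N > 0" by (simp add: Q_def)
lemma mu_nonneg: "mu N i \<ge> 0" by (simp add: mu_def)
lemma sq_le_Q: "m \<le> N \<Longrightarrow> (real m)^2 \<le> Q N"
proof -
  assume "m \<le> N"
  then have "(real m)^2 \<le> (real N)^2" by (simp add: power_mono)
  also have "\<dots> \<le> Q N" by (simp add: Q_def power2_eq_square algebra_simps)
  finally show ?thesis .
qed

lemma avg_nonneg: "N \<ge> 1 \<Longrightarrow> m \<le> N \<Longrightarrow> g (m - 1) \<ge> 0 \<Longrightarrow> g m \<ge> 0 \<Longrightarrow> avg N g m \<ge> 0"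
  unfolding avg_def using Q_pos[of N] sq_le_Q[of m N]
  by (intro divide_nonneg_pos add_nonneg_nonneg mult_nonneg_nonneg) auto

lemma avg_mono: "N \<ge> 1 \<Longrightarrow> m \<le> N \<Longrightarrow> g (m - 1) \<le> h (m - 1) \<Longrightarrow> g m \<le> h m \<Longrightarrow> avg N g m \<le> avg N h m"
  unfolding avg_def using Q_pos[of N] sq_le_Q[of m N]
  by (intro divide_right_mono add_mono mult_left_mono) auto

lemma avg_const: "N \<ge> 1 \<Longrightarrow> avg N (\<lambda>_. a) m = a"
  unfolding avg_def using Q_pos[of N] by (simp add: field_simps)

lemma avg_zero: "N \<ge> 1 \<Longrightarrow> avg N g 0 = g 0"
  unfolding avg_def using Q_pos[of N] by simp

lemma vv_nonneg: "N \<ge> 1 \<Longrightarrow> m \<le> N \<Longrightarrow> 0 \<le> vv N n j m"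
proof (induction n arbitrary: j m)
  case 0 then show ?case by simp
next
  case (Suc n)
  show ?case
  proof (cases "m = 0 \<or> m = 1")
    case True
    have "0 \<le> avg N (vv N n k) 1" for k using Suc avg_nonneg[of N 1] by auto
    then show ?thesis using True mu_nonneg
      by (auto intro!: sum_nonneg mult_nonneg_nonneg)
  next
    case False
    then show ?thesis using Suc avg_nonneg[of N m "vv N n j"] by simp
  qed
qed

lemma ww_nonneg: "N \<ge> 1 \<Longrightarrow> m \<le> N \<Longrightarrow> 0 \<le> ww N n j m"
proof (induction n arbitrary: m)
  case 0 then show ?case by simp
next
  case (Suc n)
  show ?case
  proof (cases "m = 0 \<or> m = 1")
    case True
    then show ?thesis using vv_nonneg[OF Suc.prems(1)] Suc.prems by (auto simp del: vv.simps)
  next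
    case False
    have "0 \<le> avg N (vv N n j) m" using vv_nonneg[OF Suc.prems(1)] Suc.prems by (intro avg_nonneg) auto
    moreover have "0 \<le> avg N (ww N n j) m" using Suc by (intro avg_nonneg) auto
    ultimately show ?thesis using False mu_nonneg by simp
  qed
qed

lemma Hs_nonneg: "0 \<le> Hs m" unfolding Hs_def by (auto intro!: sum_nonneg)
lemma BB_nonneg: "0 \<le> BB N m" unfolding BB_def Q_def using Hs_nonneg by simp

lemma Hs_Suc: "Hs (Suc m) = Hs m + 1 / (real m + 1)^2" unfolding Hs_def by simp

lemma BB_step: "N \<ge> 1 \<Longrightarrow> (if m = 0 then 0 else 1) + avg N (BB N) m = BB N m"
proof (cases m)
  case 0 assume "N \<ge> 1" then show ?thesis using 0 avg_zero by simp
next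
  case (Suc k)
  assume N: "N \<ge> 1"
  have "BB N m = BB N k + Q N / (real k + 1)^2" unfolding BB_def Suc Hs_Suc by (simp add: algebra_simps)
  then show ?thesis unfolding avg_def using Suc Q_pos[OF N]
    by (simp add: field_simps)
qed


definition EA :: "nat \<Rightarrow> real measure" where "EA N = density lborel (exponential_density (real N + 1))"
definition PM :: "nat \<Rightarrow> (nat \<times> nat) measure" where "PM N = measure_pmf (pmf_of_set ({0..N} \<times> {1..N}))"

lemma step_measure_eq: "dsf_step_measure N = EA N \<Otimes>\<^sub>M PM N"
  by (simp add: dsf_step_measure_def EA_def PM_def)

lemma prob_EA: "prob_space (EA N)" unfolding EA_def by (rule prob_space_exponential_density) simp
lemma prob_PM: "prob_space (PM N)" unfolding PM_def by (rule prob_space_measure_pmf)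
lemma prob_M: "prob_space (dsf_step_measure N)" by (simp add: step_measure_eq prob_space_pair prob_EA prob_PM)
lemma prob_S: "prob_space (dsf_space N)" unfolding dsf_space_def by (rule prob_space_PiM) (rule prob_M)

lemma sets_EA[measurable_cong]: "sets (EA N) = sets borel" by (simp add: EA_def)
lemma sets_PM[measurable_cong]: "sets (PM N) = sets (count_space UNIV)" by (simp add: PM_def)

lemma meas_fst[measurable]: "(\<lambda>\<omega>. fst (\<omega> k)) \<in> borel_measurable (dsf_space N)"
  unfolding dsf_space_def step_measure_eq by measurable

lemma meas_snd[measurable]: "(\<lambda>\<omega>. snd (\<omega> k)) \<in> dsf_space N \<rightarrow>\<^sub>M count_space UNIV"
  unfolding dsf_space_def step_measure_eq by measurable

lemma pred_conf[measurable]: "Measurable.pred (dsf_space N) (\<lambda>\<omega>. P (dsf_conf N c \<omega> k))"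
proof (induction k arbitrary: P)
  case 0 show ?case by simp
next
  case (Suc k)
  have "(\<lambda>\<omega>. (\<lambda>a \<omega>. P (dsf_step N (dsf_conf N c \<omega> k) a)) (snd (\<omega> k)) \<omega>) \<in> dsf_space N \<rightarrow>\<^sub>M count_space UNIV"
    by (rule measurable_compose_countable[OF Suc.IH meas_snd])
  then show ?case by simp
qed


lemma nn_integral_first:
  assumes f[measurable]: "f \<in> borel_measurable (dsf_space N)"
  shows "(\<integral>\<^sup>+\<omega>. f \<omega> \<partial>dsf_space N) = (\<integral>\<^sup>+x. \<integral>\<^sup>+\<omega>. f (case_nat x \<omega>) \<partial>dsf_space N \<partial>dsf_step_measure N)"
proof -
  interpret M: prob_space "dsf_step_measure N" by (rule prob_M)
  interpret S: sequence_space "dsf_step_measure N" ..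
  have f'[measurable]: "f \<in> borel_measurable (\<Pi>\<^sub>M i\<in>UNIV. dsf_step_measure N)" using f unfolding dsf_space_def .
  have "(\<integral>\<^sup>+\<omega>. f \<omega> \<partial>dsf_space N) = (\<integral>\<^sup>+X. f ((\<lambda>(s, \<omega>). case_nat s \<omega>) X) \<partial>(dsf_step_measure N \<Otimes>\<^sub>M (\<Pi>\<^sub>M i\<in>UNIV. dsf_step_measure N)))"
    unfolding dsf_space_def by (subst S.PiM_iter[symmetric]) (simp add: nn_integral_distr)
  also have "\<dots> = (\<integral>\<^sup>+x. \<integral>\<^sup>+\<omega>. f (case_nat x \<omega>) \<partial>(\<Pi>\<^sub>M i\<in>UNIV. dsf_step_measure N) \<partial>dsf_step_measure N)"
  proof -
    have m: "(\<lambda>X. f (case_prod case_nat X)) \<in> borel_measurable (dsf_step_measure N \<Otimes>\<^sub>M (\<Pi>\<^sub>M i\<in>UNIV. dsf_step_measure N))"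
      by measurable
    show ?thesis using S.nn_integral_fst[OF m] by (simp add: split_beta')
  qed
  finally show ?thesis unfolding dsf_space_def .
qed

lemma nn_integral_step:
  assumes N: "N \<ge> 1" and g: "\<And>a mk. 0 \<le> g a mk" and [measurable]: "(\<lambda>x. g (fst x) (snd x)) \<in> borel_measurable (dsf_step_measure N)"
  shows "(\<integral>\<^sup>+x. ennreal (g (fst x) (snd x)) \<partial>dsf_step_measure N)
     = (\<integral>\<^sup>+a. ennreal ((\<Sum>mk\<in>{0..N}\<times>{1..N}. g a mk) / real (card ({0..N}\<times>{1..N}))) \<partial>EA N)"
proof -
  interpret A: prob_space "EA N" by (rule prob_EA)
  interpret B: prob_space "PM N" by (rule prob_PM)
  interpret P: pair_sigma_finite "EA N" "PM N" ..
  have ne: "{0..N}\<times>{1..N} \<noteq> {}" using N by auto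
  have "(\<integral>\<^sup>+x. ennreal (g (fst x) (snd x)) \<partial>dsf_step_measure N) = (\<integral>\<^sup>+a. \<integral>\<^sup>+mk. ennreal (g a mk) \<partial>PM N \<partial>EA N)"
    unfolding step_measure_eq by (subst B.nn_integral_fst[symmetric]) (simp_all add: step_measure_eq[symmetric])
  also have "\<dots> = (\<integral>\<^sup>+a. ennreal ((\<Sum>mk\<in>{0..N}\<times>{1..N}. g a mk) / real (card ({0..N}\<times>{1..N}))) \<partial>EA N)"
  proof (rule nn_integral_cong)
    fix a
    have "(\<integral>\<^sup>+mk. ennreal (g a mk) \<partial>PM N) = (\<Sum>mk\<in>{0..N}\<times>{1..N}. ennreal (g a mk)) / of_nat (card ({0..N}\<times>{1..N}))"
      unfolding PM_def using ne by (subst nn_integral_pmf_of_set) auto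
    also have "\<dots> = ennreal ((\<Sum>mk\<in>{0..N}\<times>{1..N}. g a mk) / real (card ({0..N}\<times>{1..N})))"
    proof -
      have s: "(\<Sum>mk\<in>{0..N}\<times>{1..N}. ennreal (g a mk)) = ennreal (\<Sum>mk\<in>{0..N}\<times>{1..N}. g a mk)"
        using g by (intro sum_ennreal) auto
      have c: "(of_nat (card ({0..N}\<times>{1..N})) :: ennreal) = ennreal (real (card ({0..N}\<times>{1..N})))"
        by (rule ennreal_of_nat_eq_real_of_nat)
      have "0 < card ({0..N}\<times>{1..N})" using ne by (intro card_gt_0_iff[THEN iffD2]) auto
      then have cp: "0 < real (card ({0..N}\<times>{1..N}))" by (simp only: of_nat_0_less_iff)
      show ?thesis unfolding s c by (rule divide_ennreal) (use g cp in \<open>auto intro: sum_nonneg\<close>)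
    qed
    finally show "(\<integral>\<^sup>+mk. ennreal (g a mk) \<partial>PM N) = ennreal ((\<Sum>mk\<in>{0..N}\<times>{1..N}. g a mk) / real (card ({0..N}\<times>{1..N})))" .
  qed
  finally show ?thesis .
qed

lemma avg_sum:
  assumes N: "N \<ge> 1" and c: "dsf_valid N c"
  shows "(\<Sum>mk\<in>{0..N}\<times>{1..N}. h (dsf_empty_count N (dsf_step N c mk))) / real (card ({0..N}\<times>{1..N}))
     = avg N h (dsf_empty_count N c)"
proof -
  let ?K = "{0..N}\<times>{1..N}" and ?D = "dropset N c" and ?m = "dsf_empty_count N c"
  have D: "?D \<subseteq> ?K" using dropset_sub[OF c] .
  have fK: "finite ?K" by simp
  have cK: "real (card ?K) = Q N" by (simp add: Q_def card_cartesian_product algebra_simps)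
  have "(\<Sum>mk\<in>?K. h (dsf_empty_count N (dsf_step N c mk))) = (\<Sum>mk\<in>?K. if mk \<in> ?D then h (?m - 1) else h ?m)"
  proof (rule sum.cong)
    fix mk assume "mk \<in> ?K"
    then obtain i off where mk: "mk = (i, off)" "1 \<le> off" "off \<le> N" by auto
    show "h (dsf_empty_count N (dsf_step N c mk)) = (if mk \<in> ?D then h (?m - 1) else h ?m)"
      using em_step[OF c mk(2,3), of i] mk(1) by simp
  qed simp
  also have "\<dots> = (\<Sum>mk\<in>?D. h (?m - 1)) + (\<Sum>mk\<in>?K - ?D. h ?m)"
  proof -
    have i1: "?K \<inter> {x. x \<in> ?D} = ?D" using D by auto
    have i2: "?K \<inter> - {x. x \<in> ?D} = ?K - ?D" by auto
    show ?thesis by (simp only: sum.If_cases[OF fK] i1 i2)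
  qed
  also have "\<dots> = real (card ?D) * h (?m - 1) + real (card (?K - ?D)) * h ?m" by simp
  also have "real (card (?K - ?D)) = Q N - (real ?m)^2"
    using card_Diff_subset[OF finite_subset[OF D fK] D] card_mono[OF fK D] cK card_drop[OF c]
    by (simp add: of_nat_diff)
  finally show ?thesis unfolding avg_def cK card_drop[OF c] by simp
qed

lemma moment_EA: "(\<integral>\<^sup>+a. ennreal ((max 0 a) ^ i) \<partial>EA N) = ennreal (mu N i)"
proof -
  have l: "0 < real N + 1" by simp
  have "(\<integral>\<^sup>+a. ennreal ((max 0 a) ^ i) \<partial>EA N) = (\<integral>\<^sup>+a. ennreal (exponential_density (real N + 1) a) * ennreal ((max 0 a) ^ i) \<partial>lborel)"
    unfolding EA_def by (subst nn_integral_density) auto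
  also have "\<dots> = (\<integral>\<^sup>+a. ennreal (erlang_density 0 (real N + 1) a * a ^ i) \<partial>lborel)"
    by (intro nn_integral_cong) (auto simp: exponential_density_def erlang_density_def ennreal_mult'[symmetric] max_def)
  also have "\<dots> = ennreal (mu N i)"
    using nn_integral_erlang_ith_moment[OF l, of 0 i] by (simp add: mu_def)
  finally show ?thesis .
qed


abbreviation em :: "nat \<Rightarrow> dsf_config \<Rightarrow> nat" where "em N c \<equiv> dsf_empty_count N c"

definition Tf :: "nat \<Rightarrow> dsf_config \<Rightarrow> nat \<Rightarrow> (nat \<Rightarrow> real \<times> nat \<times> nat) \<Rightarrow> ennreal" where
  "Tf N c n \<omega> = (\<Sum>k<n. if em N (dsf_conf N c \<omega> k) \<noteq> 0 then ennreal (fst (\<omega> k)) else 0)"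
definition tf :: "nat \<Rightarrow> dsf_config \<Rightarrow> nat \<Rightarrow> (nat \<Rightarrow> real \<times> nat \<times> nat) \<Rightarrow> ennreal" where
  "tf N c n \<omega> = (\<Sum>k<n. if em N (dsf_conf N c \<omega> k) = 1 then ennreal (fst (\<omega> k)) else 0)"
definition Cf :: "nat \<Rightarrow> dsf_config \<Rightarrow> nat \<Rightarrow> (nat \<Rightarrow> real \<times> nat \<times> nat) \<Rightarrow> ennreal" where
  "Cf N c n \<omega> = (\<Sum>k<n. if em N (dsf_conf N c \<omega> k) \<noteq> 0 then 1 else 0)"

lemma Tf_meas[measurable]: "(\<lambda>\<omega>. Tf N c n \<omega>) \<in> borel_measurable (dsf_space N)"
  unfolding Tf_def by measurable
lemma tf_meas[measurable]: "(\<lambda>\<omega>. tf N c n \<omega>) \<in> borel_measurable (dsf_space N)"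
  unfolding tf_def by measurable
lemma Cf_meas[measurable]: "(\<lambda>\<omega>. Cf N c n \<omega>) \<in> borel_measurable (dsf_space N)"
  unfolding Cf_def by measurable

lemma conf_shift: "dsf_conf N c (case_nat x \<omega>) (Suc k) = dsf_conf N (dsf_step N c (snd x)) \<omega> k"
  by (induction k) auto

lemma case_nat_Suc_app[simp]: "case_nat x \<omega> (Suc i) = \<omega> i" by simp

lemma Tf_Suc: "Tf N c (Suc n) (case_nat x \<omega>) = (if em N c \<noteq> 0 then ennreal (fst x) else 0) + Tf N (dsf_step N c (snd x)) n \<omega>"
  unfolding Tf_def sum.lessThan_Suc_shift conf_shift case_nat_Suc_app by simp
lemma tf_Suc: "tf N c (Suc n) (case_nat x \<omega>) = (if em N c = 1 then ennreal (fst x) else 0) + tf N (dsf_step N c (snd x)) n \<omega>"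
  unfolding tf_def sum.lessThan_Suc_shift conf_shift case_nat_Suc_app by simp
lemma Cf_Suc: "Cf N c (Suc n) (case_nat x \<omega>) = (if em N c \<noteq> 0 then 1 else 0) + Cf N (dsf_step N c (snd x)) n \<omega>"
  unfolding Cf_def sum.lessThan_Suc_shift conf_shift case_nat_Suc_app by simp

lemma valid_conf: "dsf_valid N c \<Longrightarrow> dsf_valid N (dsf_conf N c \<omega> k)"
  by (induction k) (auto intro: valid_step')

lemma em_conf_Suc: "dsf_valid N c \<Longrightarrow> em N (dsf_conf N c \<omega> (Suc k)) \<le> em N (dsf_conf N c \<omega> k)"
  using em_le_any'[OF valid_conf] by simp

lemma em_conf_mono: "dsf_valid N c \<Longrightarrow> k \<le> k' \<Longrightarrow> em N (dsf_conf N c \<omega> k') \<le> em N (dsf_conf N c \<omega> k)"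
  using lift_Suc_antimono_le[of "\<lambda>k. em N (dsf_conf N c \<omega> k)"] em_conf_Suc by blast

lemma em_conf_le: "dsf_valid N c \<Longrightarrow> em N (dsf_conf N c \<omega> k) \<le> em N c"
  using em_conf_mono[of N c 0 k] by simp

lemma Tf_eq_tf: "dsf_valid N c \<Longrightarrow> em N c \<le> 1 \<Longrightarrow> Tf N c n \<omega> = tf N c n \<omega>"
  unfolding Tf_def tf_def
proof (rule sum.cong)
  fix k assume "dsf_valid N c" "em N c \<le> 1"
  then have "em N (dsf_conf N c \<omega> k) \<le> 1" using em_conf_le[of N c \<omega> k] by simp
  then show "(if em N (dsf_conf N c \<omega> k) \<noteq> 0 then ennreal (fst (\<omega> k)) else 0) =
        (if em N (dsf_conf N c \<omega> k) = 1 then ennreal (fst (\<omega> k)) else 0)" by auto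
qed simp

lemma tf_zero: "dsf_valid N c \<Longrightarrow> em N c = 0 \<Longrightarrow> tf N c n \<omega> = 0"
  unfolding tf_def using em_conf_le[of N c \<omega>] by (intro sum.neutral) (auto simp: le_zero_eq)
lemma Tf_zero: "dsf_valid N c \<Longrightarrow> em N c = 0 \<Longrightarrow> Tf N c n \<omega> = 0"
  unfolding Tf_def using em_conf_le[of N c \<omega>] by (intro sum.neutral) (auto simp: le_zero_eq)

lemma ennreal_pow_max: "ennreal a ^ i = ennreal ((max 0 a) ^ i)"
proof (cases "a \<ge> 0")
  case True then show ?thesis by (simp add: ennreal_power max_def)
next
  case False then show ?thesis by (cases i) (auto simp: ennreal_neg max_def)
qed

lemma meas_EA_pow[measurable]: "(\<lambda>a. ennreal ((max 0 a) ^ i)) \<in> borel_measurable (EA N)"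
  by measurable

lemma EA_poly:
  assumes K: "\<And>i. 0 \<le> K i"
  shows "(\<integral>\<^sup>+a. ennreal (\<Sum>i\<le>j. K i * (max 0 a) ^ i) \<partial>EA N) = ennreal (\<Sum>i\<le>j. K i * mu N i)"
proof -
  have "(\<integral>\<^sup>+a. ennreal (\<Sum>i\<le>j. K i * (max 0 a) ^ i) \<partial>EA N) = (\<integral>\<^sup>+a. (\<Sum>i\<le>j. ennreal (K i) * ennreal ((max 0 a) ^ i)) \<partial>EA N)"
    using K by (intro nn_integral_cong) (simp add: sum_ennreal[symmetric] ennreal_mult)
  also have "\<dots> = (\<Sum>i\<le>j. ennreal (K i) * (\<integral>\<^sup>+a. ennreal ((max 0 a) ^ i) \<partial>EA N))"
    by (subst nn_integral_sum) (simp_all add: nn_integral_cmult[OF meas_EA_pow])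
  also have "\<dots> = (\<Sum>i\<le>j. ennreal (K i) * ennreal (mu N i))" by (simp add: moment_EA)
  also have "\<dots> = ennreal (\<Sum>i\<le>j. K i * mu N i)"
    using K mu_nonneg by (simp add: sum_ennreal[symmetric] ennreal_mult)
  finally show ?thesis .
qed

lemma EA_const: "(\<integral>\<^sup>+a. ennreal b \<partial>EA N) = ennreal b"
  using prob_space.emeasure_space_1[OF prob_EA] by simp

lemma S_const: "(\<integral>\<^sup>+a. b \<partial>dsf_space N) = b"
  using prob_space.emeasure_space_1[OF prob_S] by simp

lemma meas_snd_any[measurable]: "(\<lambda>x. h (snd x)) \<in> borel_measurable (dsf_step_measure N)"
  unfolding step_measure_eq by measurable


lemma meas_prod:
  fixes f :: "real \<Rightarrow> real" and h :: "nat \<times> nat \<Rightarrow> real"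
  assumes f: "f \<in> borel_measurable borel"
  shows "(\<lambda>x. f (fst x) * h (snd x)) \<in> borel_measurable (dsf_step_measure N)"
proof -
  have f': "f \<in> borel_measurable (EA N)" using f measurable_cong_sets[OF sets_EA refl] by blast
  have "(\<lambda>x. f (fst x)) \<in> borel_measurable (dsf_step_measure N)"
    unfolding step_measure_eq using measurable_compose[OF measurable_fst[of "EA N" "PM N"] f'] by (simp add: comp_def)
  then show ?thesis using meas_snd_any[of h N] by (rule borel_measurable_times)
qed

lemma S_space[simp]: "emeasure (dsf_space N) (space (dsf_space N)) = 1"
  using prob_space.emeasure_space_1[OF prob_S] .
lemma EA_space[simp]: "emeasure (EA N) (space (EA N)) = 1"
  using prob_space.emeasure_space_1[OF prob_EA] .

lemma Ev:
  assumes N: "N \<ge> 1"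
  shows "dsf_valid N c \<Longrightarrow> (\<integral>\<^sup>+\<omega>. tf N c n \<omega> ^ j \<partial>dsf_space N) = ennreal (vv N n j (em N c))"
proof (induction n arbitrary: c j)
  case 0
  have "tf N c 0 \<omega> ^ j = ennreal (if j = 0 then 1 else 0)" for \<omega> by (simp add: tf_def)
  then show ?case by (simp add: S_const)
next
  case (Suc n)
  note c = Suc.prems
  have cN: "em N c \<le> N" by (rule em_le[OF c])
  have IH: "\<And>x j. (\<integral>\<^sup>+\<omega>. tf N (dsf_step N c (snd x)) n \<omega> ^ j \<partial>dsf_space N) = ennreal (vv N n j (em N (dsf_step N c (snd x))))"
    using Suc.IH valid_step'[OF c] by blast
  have vnn: "\<And>mk j. 0 \<le> vv N n j (em N (dsf_step N c mk))"
    using vv_nonneg[OF N] em_le[OF valid_step'[OF c]] by blast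
  have first: "(\<integral>\<^sup>+\<omega>. tf N c (Suc n) \<omega> ^ j \<partial>dsf_space N) = (\<integral>\<^sup>+x. \<integral>\<^sup>+\<omega>. tf N c (Suc n) (case_nat x \<omega>) ^ j \<partial>dsf_space N \<partial>dsf_step_measure N)"
    by (rule nn_integral_first) measurable
  consider "em N c = 0" | "em N c = 1" | "em N c \<ge> 2" by linarith
  then show ?case
  proof cases
    case 1
    then have "tf N c (Suc n) \<omega> ^ j = ennreal (if j = 0 then 1 else 0)" for \<omega> using tf_zero[OF c] by simp
    then show ?thesis using 1 by (simp add: S_const)
  next
    case 3
    have "(\<integral>\<^sup>+x. \<integral>\<^sup>+\<omega>. tf N c (Suc n) (case_nat x \<omega>) ^ j \<partial>dsf_space N \<partial>dsf_step_measure N)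
        = (\<integral>\<^sup>+x. ennreal (vv N n j (em N (dsf_step N c (snd x)))) \<partial>dsf_step_measure N)"
      using 3 by (simp add: tf_Suc IH)
    also have "\<dots> = (\<integral>\<^sup>+a. ennreal ((\<Sum>mk\<in>{0..N}\<times>{1..N}. vv N n j (em N (dsf_step N c mk))) / real (card ({0..N}\<times>{1..N}))) \<partial>EA N)"
    proof (rule nn_integral_step[OF N, where g="\<lambda>a mk. vv N n j (em N (dsf_step N c mk))"])
      show "(\<lambda>x. vv N n j (em N (dsf_step N c (snd x)))) \<in> borel_measurable (dsf_step_measure N)" by measurable
    qed (rule vnn)
    also have "\<dots> = ennreal (avg N (vv N n j) (em N c))"
      using avg_sum[OF N c, of "vv N n j"] by (simp add: EA_const)
    finally show ?thesis using first 3 by simp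
  next
    case 2
    have inner: "(\<integral>\<^sup>+\<omega>. tf N c (Suc n) (case_nat x \<omega>) ^ j \<partial>dsf_space N)
       = ennreal (\<Sum>i\<le>j. real (j choose i) * (max 0 (fst x)) ^ i * vv N n (j - i) (em N (dsf_step N c (snd x))))" for x
    proof -
      let ?t = "\<lambda>\<omega>. tf N (dsf_step N c (snd x)) n \<omega>"
      have "(\<integral>\<^sup>+\<omega>. tf N c (Suc n) (case_nat x \<omega>) ^ j \<partial>dsf_space N) = (\<integral>\<^sup>+\<omega>. (ennreal (fst x) + ?t \<omega>) ^ j \<partial>dsf_space N)"
        using 2 by (simp add: tf_Suc)
      also have "\<dots> = (\<integral>\<^sup>+\<omega>. (\<Sum>i\<le>j. of_nat (j choose i) * ennreal (fst x) ^ i * ?t \<omega> ^ (j - i)) \<partial>dsf_space N)"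
        by (simp add: binomial_ring)
      also have "\<dots> = (\<Sum>i\<le>j. of_nat (j choose i) * ennreal (fst x) ^ i * (\<integral>\<^sup>+\<omega>. ?t \<omega> ^ (j - i) \<partial>dsf_space N))"
        by (subst nn_integral_sum) (simp_all add: nn_integral_cmult)
      also have "\<dots> = (\<Sum>i\<le>j. ennreal (real (j choose i) * (max 0 (fst x)) ^ i * vv N n (j - i) (em N (dsf_step N c (snd x)))))"
        by (intro sum.cong refl) (simp add: IH ennreal_pow_max ennreal_mult vnn ennreal_of_nat_eq_real_of_nat)
      also have "\<dots> = ennreal (\<Sum>i\<le>j. real (j choose i) * (max 0 (fst x)) ^ i * vv N n (j - i) (em N (dsf_step N c (snd x))))"
        by (rule sum_ennreal) (simp add: vnn)
      finally show ?thesis .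
    qed
    have "(\<integral>\<^sup>+x. \<integral>\<^sup>+\<omega>. tf N c (Suc n) (case_nat x \<omega>) ^ j \<partial>dsf_space N \<partial>dsf_step_measure N)
      = (\<integral>\<^sup>+x. ennreal (\<Sum>i\<le>j. real (j choose i) * (max 0 (fst x)) ^ i * vv N n (j - i) (em N (dsf_step N c (snd x)))) \<partial>dsf_step_measure N)"
      by (rule nn_integral_cong) (rule inner)
    also have "\<dots> = (\<integral>\<^sup>+a. ennreal ((\<Sum>mk\<in>{0..N}\<times>{1..N}. \<Sum>i\<le>j. real (j choose i) * (max 0 a) ^ i * vv N n (j - i) (em N (dsf_step N c mk))) / real (card ({0..N}\<times>{1..N}))) \<partial>EA N)"
    proof (rule nn_integral_step[OF N, where g="\<lambda>a mk. \<Sum>i\<le>j. real (j choose i) * (max 0 a) ^ i * vv N n (j - i) (em N (dsf_step N c mk))"])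
      show "(\<lambda>x. \<Sum>i\<le>j. real (j choose i) * (max 0 (fst x)) ^ i * vv N n (j - i) (em N (dsf_step N c (snd x)))) \<in> borel_measurable (dsf_step_measure N)"
      proof (rule borel_measurable_sum)
        fix i
        have "(\<lambda>a. real (j choose i) * (max 0 a) ^ i) \<in> borel_measurable borel" by measurable
        then show "(\<lambda>x. real (j choose i) * (max 0 (fst x)) ^ i * vv N n (j - i) (em N (dsf_step N c (snd x)))) \<in> borel_measurable (dsf_step_measure N)"
          by (rule meas_prod[of "\<lambda>a. real (j choose i) * (max 0 a) ^ i" "\<lambda>mk. vv N n (j - i) (em N (dsf_step N c mk))"])
      qed
    next
      fix a mk
      show "0 \<le> (\<Sum>i\<le>j. real (j choose i) * (max 0 a) ^ i * vv N n (j - i) (em N (dsf_step N c mk)))"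
        by (intro sum_nonneg mult_nonneg_nonneg) (simp_all add: vnn)
    qed
    also have "\<dots> = (\<integral>\<^sup>+a. ennreal (\<Sum>i\<le>j. (real (j choose i) * avg N (vv N n (j - i)) 1) * (max 0 a) ^ i) \<partial>EA N)"
    proof (rule nn_integral_cong)
      fix a
      have "(\<Sum>mk\<in>{0..N}\<times>{1..N}. \<Sum>i\<le>j. real (j choose i) * (max 0 a) ^ i * vv N n (j - i) (em N (dsf_step N c mk))) / real (card ({0..N}\<times>{1..N}))
         = (\<Sum>i\<le>j. real (j choose i) * (max 0 a) ^ i * ((\<Sum>mk\<in>{0..N}\<times>{1..N}. vv N n (j - i) (em N (dsf_step N c mk))) / real (card ({0..N}\<times>{1..N}))))"
        by (subst sum.swap) (simp add: sum_divide_distrib sum_distrib_left)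
      also have "\<dots> = (\<Sum>i\<le>j. (real (j choose i) * avg N (vv N n (j - i)) 1) * (max 0 a) ^ i)"
      proof (rule sum.cong[OF refl])
        fix i
        show "real (j choose i) * (max 0 a) ^ i * ((\<Sum>mk\<in>{0..N}\<times>{1..N}. vv N n (j - i) (em N (dsf_step N c mk))) / real (card ({0..N}\<times>{1..N})))
          = (real (j choose i) * avg N (vv N n (j - i)) 1) * (max 0 a) ^ i"
          using avg_sum[OF N c, of "vv N n (j - i)"] 2 by simp
      qed
      finally show "ennreal ((\<Sum>mk\<in>{0..N}\<times>{1..N}. \<Sum>i\<le>j. real (j choose i) * (max 0 a) ^ i * vv N n (j - i) (em N (dsf_step N c mk))) / real (card ({0..N}\<times>{1..N})))
         = ennreal (\<Sum>i\<le>j. (real (j choose i) * avg N (vv N n (j - i)) 1) * (max 0 a) ^ i)" by simp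
    qed
    also have "\<dots> = ennreal (\<Sum>i\<le>j. (real (j choose i) * avg N (vv N n (j - i)) 1) * mu N i)"
    proof (rule EA_poly)
      fix i
      have "0 \<le> avg N (vv N n (j - i)) 1" using vv_nonneg[OF N] N by (intro avg_nonneg) auto
      then show "0 \<le> real (j choose i) * avg N (vv N n (j - i)) 1" by simp
    qed
    also have "\<dots> = ennreal (vv N (Suc n) j (em N c))"
      using 2 by (simp add: mult_ac)
    finally show ?thesis using first by simp
  qed
qed


lemma meas_add_snd:
  fixes f :: "real \<Rightarrow> real" and h g :: "nat \<times> nat \<Rightarrow> real"
  assumes f: "f \<in> borel_measurable borel"
  shows "(\<lambda>x. f (fst x) * h (snd x) + g (snd x)) \<in> borel_measurable (dsf_step_measure N)"
  by (rule borel_measurable_add[OF meas_prod[OF f] meas_snd_any])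

lemma Ew:
  assumes N: "N \<ge> 1"
  shows "dsf_valid N c \<Longrightarrow> (\<integral>\<^sup>+\<omega>. Tf N c n \<omega> * tf N c n \<omega> ^ j \<partial>dsf_space N) = ennreal (ww N n j (em N c))"
proof (induction n arbitrary: c)
  case 0
  then show ?case by (simp add: Tf_def)
next
  case (Suc n)
  note c = Suc.prems
  have IH: "\<And>x. (\<integral>\<^sup>+\<omega>. Tf N (dsf_step N c (snd x)) n \<omega> * tf N (dsf_step N c (snd x)) n \<omega> ^ j \<partial>dsf_space N) = ennreal (ww N n j (em N (dsf_step N c (snd x))))"
    using Suc.IH valid_step'[OF c] by blast
  have IHv: "\<And>x. (\<integral>\<^sup>+\<omega>. tf N (dsf_step N c (snd x)) n \<omega> ^ j \<partial>dsf_space N) = ennreal (vv N n j (em N (dsf_step N c (snd x))))"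
    using Ev[OF N] valid_step'[OF c] by blast
  have vnn: "\<And>mk. 0 \<le> vv N n j (em N (dsf_step N c mk))"
    using vv_nonneg[OF N] em_le[OF valid_step'[OF c]] by blast
  have wnn: "\<And>mk. 0 \<le> ww N n j (em N (dsf_step N c mk))"
    using ww_nonneg[OF N] em_le[OF valid_step'[OF c]] by blast
  consider "em N c = 0" | "em N c = 1" | "em N c \<ge> 2" by linarith
  then show ?case
  proof cases
    case 1
    then show ?thesis using Tf_zero[OF c] by simp
  next
    case 2
    have "(\<integral>\<^sup>+\<omega>. Tf N c (Suc n) \<omega> * tf N c (Suc n) \<omega> ^ j \<partial>dsf_space N) = (\<integral>\<^sup>+\<omega>. tf N c (Suc n) \<omega> ^ Suc j \<partial>dsf_space N)"
      using Tf_eq_tf[OF c] 2 by simp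
    also have "\<dots> = ennreal (vv N (Suc n) (Suc j) (em N c))" by (rule Ev[OF N c])
    finally show ?thesis using 2 by simp
  next
    case 3
    have first: "(\<integral>\<^sup>+\<omega>. Tf N c (Suc n) \<omega> * tf N c (Suc n) \<omega> ^ j \<partial>dsf_space N)
      = (\<integral>\<^sup>+x. \<integral>\<^sup>+\<omega>. Tf N c (Suc n) (case_nat x \<omega>) * tf N c (Suc n) (case_nat x \<omega>) ^ j \<partial>dsf_space N \<partial>dsf_step_measure N)"
      by (rule nn_integral_first) measurable
    have inner: "(\<integral>\<^sup>+\<omega>. Tf N c (Suc n) (case_nat x \<omega>) * tf N c (Suc n) (case_nat x \<omega>) ^ j \<partial>dsf_space N)
       = ennreal (max 0 (fst x) * vv N n j (em N (dsf_step N c (snd x))) + ww N n j (em N (dsf_step N c (snd x))))" for x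
    proof -
      let ?T = "\<lambda>\<omega>. Tf N (dsf_step N c (snd x)) n \<omega>" and ?t = "\<lambda>\<omega>. tf N (dsf_step N c (snd x)) n \<omega>"
      have "(\<integral>\<^sup>+\<omega>. Tf N c (Suc n) (case_nat x \<omega>) * tf N c (Suc n) (case_nat x \<omega>) ^ j \<partial>dsf_space N)
          = (\<integral>\<^sup>+\<omega>. ennreal (fst x) * ?t \<omega> ^ j + ?T \<omega> * ?t \<omega> ^ j \<partial>dsf_space N)"
        using 3 by (simp add: Tf_Suc tf_Suc distrib_right)
      also have "\<dots> = ennreal (fst x) * (\<integral>\<^sup>+\<omega>. ?t \<omega> ^ j \<partial>dsf_space N) + (\<integral>\<^sup>+\<omega>. ?T \<omega> * ?t \<omega> ^ j \<partial>dsf_space N)"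
        by (subst nn_integral_add) (simp_all add: nn_integral_cmult)
      also have "\<dots> = ennreal (max 0 (fst x) * vv N n j (em N (dsf_step N c (snd x))) + ww N n j (em N (dsf_step N c (snd x))))"
        using vnn wnn by (simp add: IH IHv ennreal_pow_max[of _ 1, simplified] ennreal_mult ennreal_plus)
      finally show ?thesis .
    qed
    have "(\<integral>\<^sup>+x. \<integral>\<^sup>+\<omega>. Tf N c (Suc n) (case_nat x \<omega>) * tf N c (Suc n) (case_nat x \<omega>) ^ j \<partial>dsf_space N \<partial>dsf_step_measure N)
      = (\<integral>\<^sup>+x. ennreal (max 0 (fst x) * vv N n j (em N (dsf_step N c (snd x))) + ww N n j (em N (dsf_step N c (snd x)))) \<partial>dsf_step_measure N)"
      by (rule nn_integral_cong) (rule inner)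
    also have "\<dots> = (\<integral>\<^sup>+a. ennreal ((\<Sum>mk\<in>{0..N}\<times>{1..N}. max 0 a * vv N n j (em N (dsf_step N c mk)) + ww N n j (em N (dsf_step N c mk))) / real (card ({0..N}\<times>{1..N}))) \<partial>EA N)"
    proof (rule nn_integral_step[OF N, where g="\<lambda>a mk. max 0 a * vv N n j (em N (dsf_step N c mk)) + ww N n j (em N (dsf_step N c mk))"])
      have "(\<lambda>a::real. max 0 a) \<in> borel_measurable borel" by (rule borel_measurable_max) auto
      then show "(\<lambda>x. max 0 (fst x) * vv N n j (em N (dsf_step N c (snd x))) + ww N n j (em N (dsf_step N c (snd x)))) \<in> borel_measurable (dsf_step_measure N)"
        by (rule meas_add_snd[of "\<lambda>a. max 0 a" "\<lambda>mk. vv N n j (em N (dsf_step N c mk))" "\<lambda>mk. ww N n j (em N (dsf_step N c mk))"])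
    next
      fix a mk
      show "0 \<le> max 0 a * vv N n j (em N (dsf_step N c mk)) + ww N n j (em N (dsf_step N c mk))"
        using vnn[of mk] wnn[of mk] by simp
    qed
    also have "\<dots> = (\<integral>\<^sup>+a. ennreal (\<Sum>i\<le>1. (if i = 0 then avg N (ww N n j) (em N c) else avg N (vv N n j) (em N c)) * (max 0 a) ^ i) \<partial>EA N)"
    proof (rule nn_integral_cong)
      fix a
      have "(\<Sum>mk\<in>{0..N}\<times>{1..N}. max 0 a * vv N n j (em N (dsf_step N c mk)) + ww N n j (em N (dsf_step N c mk))) / real (card ({0..N}\<times>{1..N}))
        = max 0 a * ((\<Sum>mk\<in>{0..N}\<times>{1..N}. vv N n j (em N (dsf_step N c mk))) / real (card ({0..N}\<times>{1..N})))
          + (\<Sum>mk\<in>{0..N}\<times>{1..N}. ww N n j (em N (dsf_step N c mk))) / real (card ({0..N}\<times>{1..N}))"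
        by (simp add: sum.distrib sum_distrib_left add_divide_distrib)
      also have "\<dots> = max 0 a * avg N (vv N n j) (em N c) + avg N (ww N n j) (em N c)"
        by (simp only: avg_sum[OF N c])
      finally show "ennreal ((\<Sum>mk\<in>{0..N}\<times>{1..N}. max 0 a * vv N n j (em N (dsf_step N c mk)) + ww N n j (em N (dsf_step N c mk))) / real (card ({0..N}\<times>{1..N})))
         = ennreal (\<Sum>i\<le>1. (if i = 0 then avg N (ww N n j) (em N c) else avg N (vv N n j) (em N c)) * (max 0 a) ^ i)"
        by (simp add: ac_simps)
    qed
    also have "\<dots> = ennreal (\<Sum>i\<le>1. (if i = 0 then avg N (ww N n j) (em N c) else avg N (vv N n j) (em N c)) * mu N i)"
    proof (rule EA_poly)
      fix i
      have "0 \<le> avg N (ww N n j) (em N c)" using ww_nonneg[OF N] em_le[OF c] N by (intro avg_nonneg) auto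
      moreover have "0 \<le> avg N (vv N n j) (em N c)" using vv_nonneg[OF N] em_le[OF c] N by (intro avg_nonneg) auto
      ultimately show "0 \<le> (if i = 0 then avg N (ww N n j) (em N c) else avg N (vv N n j) (em N c))" by simp
    qed
    also have "\<dots> = ennreal (ww N (Suc n) j (em N c))"
      using 3 by (simp add: mu_def add.commute)
    finally show ?thesis using first by simp
  qed
qed

lemma Ec:
  assumes N: "N \<ge> 1"
  shows "dsf_valid N c \<Longrightarrow> (\<integral>\<^sup>+\<omega>. Cf N c n \<omega> \<partial>dsf_space N) \<le> ennreal (BB N (em N c))"
proof (induction n arbitrary: c)
  case 0
  then show ?case by (simp add: Cf_def)
next
  case (Suc n)
  note c = Suc.prems
  have IH: "\<And>x. (\<integral>\<^sup>+\<omega>. Cf N (dsf_step N c (snd x)) n \<omega> \<partial>dsf_space N) \<le> ennreal (BB N (em N (dsf_step N c (snd x))))"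
    using Suc.IH valid_step'[OF c] by blast
  let ?ind = "(if em N c = 0 then 0 else 1) :: real"
  have "(\<integral>\<^sup>+\<omega>. Cf N c (Suc n) \<omega> \<partial>dsf_space N) = (\<integral>\<^sup>+x. \<integral>\<^sup>+\<omega>. Cf N c (Suc n) (case_nat x \<omega>) \<partial>dsf_space N \<partial>dsf_step_measure N)"
    by (rule nn_integral_first) measurable
  also have "\<dots> = (\<integral>\<^sup>+x. ennreal ?ind + (\<integral>\<^sup>+\<omega>. Cf N (dsf_step N c (snd x)) n \<omega> \<partial>dsf_space N) \<partial>dsf_step_measure N)"
  proof (rule nn_integral_cong)
    fix x
    have "(\<integral>\<^sup>+\<omega>. Cf N c (Suc n) (case_nat x \<omega>) \<partial>dsf_space N) = (\<integral>\<^sup>+\<omega>. ennreal ?ind + Cf N (dsf_step N c (snd x)) n \<omega> \<partial>dsf_space N)"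
      by (simp add: Cf_Suc)
    also have "\<dots> = ennreal ?ind + (\<integral>\<^sup>+\<omega>. Cf N (dsf_step N c (snd x)) n \<omega> \<partial>dsf_space N)"
      by (subst nn_integral_add) (simp_all add: S_const)
    finally show "(\<integral>\<^sup>+\<omega>. Cf N c (Suc n) (case_nat x \<omega>) \<partial>dsf_space N) = ennreal ?ind + (\<integral>\<^sup>+\<omega>. Cf N (dsf_step N c (snd x)) n \<omega> \<partial>dsf_space N)" .
  qed
  also have "\<dots> \<le> (\<integral>\<^sup>+x. ennreal (?ind + BB N (em N (dsf_step N c (snd x)))) \<partial>dsf_step_measure N)"
    by (intro nn_integral_mono) (simp add: ennreal_plus BB_nonneg add_left_mono IH del: ennreal_plus[symmetric])
  also have "\<dots> = (\<integral>\<^sup>+a. ennreal ((\<Sum>mk\<in>{0..N}\<times>{1..N}. ?ind + BB N (em N (dsf_step N c mk))) / real (card ({0..N}\<times>{1..N}))) \<partial>EA N)"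
  proof (rule nn_integral_step[OF N, where g="\<lambda>a mk. ?ind + BB N (em N (dsf_step N c mk))"])
    show "(\<lambda>x. ?ind + BB N (em N (dsf_step N c (snd x)))) \<in> borel_measurable (dsf_step_measure N)"
      by (rule meas_snd_any[of "\<lambda>mk. ?ind + BB N (em N (dsf_step N c mk))"])
  qed (simp add: BB_nonneg)
  also have "\<dots> = ennreal (?ind + avg N (BB N) (em N c))"
  proof -
    have "(\<Sum>mk\<in>{0..N}\<times>{1..N}. ?ind + BB N (em N (dsf_step N c mk))) / real (card ({0..N}\<times>{1..N}))
      = ?ind * (real (card ({0..N}\<times>{1..N})) / real (card ({0..N}\<times>{1..N}))) + (\<Sum>mk\<in>{0..N}\<times>{1..N}. BB N (em N (dsf_step N c mk))) / real (card ({0..N}\<times>{1..N}))"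
      by (simp add: sum.distrib add_divide_distrib)
    also have "\<dots> = ?ind + avg N (BB N) (em N c)"
    proof -
      have "0 < real N + real N * real N" using N by (intro add_pos_nonneg) auto
      then have "real N + real N * real N \<noteq> 0" by simp
      then have "real (card ({0..N}\<times>{1..N})) \<noteq> 0" by (simp add: card_cartesian_product algebra_simps)
      then show ?thesis by (simp only: avg_sum[OF N c]) simp
    qed
    finally show ?thesis by (simp add: EA_const)
  qed
  also have "\<dots> = ennreal (BB N (em N c))" using BB_step[OF N, of "em N c"] by simp
  finally show ?case .
qed


definition Vl :: "nat \<Rightarrow> nat \<Rightarrow> nat \<Rightarrow> real" where
  "Vl N j m = (if m = 0 then (if j = 0 then 1 else 0) else fact j * real N ^ j)"
definition Wl :: "nat \<Rightarrow> nat \<Rightarrow> nat \<Rightarrow> real" where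
  "Wl N j m = (if m = 0 then 0 else real N * (Hs m - 1) * (fact j * real N ^ j) + fact (j + 1) * real N ^ (j + 1))"
definition G :: "nat \<Rightarrow> nat \<Rightarrow> real" where
  "G N j = (\<Sum>i\<le>j. real N ^ (j - i) / (real N + 1) ^ i)"

lemma G_Suc: "G N (Suc j) = real N * G N j + 1 / (real N + 1) ^ Suc j"
proof -
  have "G N (Suc j) = (\<Sum>i\<le>j. real N ^ (Suc j - i) / (real N + 1) ^ i) + real N ^ (Suc j - Suc j) / (real N + 1) ^ Suc j"
    unfolding G_def by (rule sum.atMost_Suc)
  also have "(\<Sum>i\<le>j. real N ^ (Suc j - i) / (real N + 1) ^ i) = real N * G N j"
    unfolding G_def sum_distrib_left by (intro sum.cong refl) (simp add: Suc_diff_le)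
  finally show ?thesis by simp
qed

lemma G_ident: "N \<ge> 1 \<Longrightarrow> (Q N - 1) * G N j + 1 / (real N + 1) ^ j = Q N * real N ^ j"
proof (induction j)
  case 0 then show ?case by (simp add: G_def)
next
  case (Suc j)
  have e: "Q N / (real N + 1) ^ Suc j = real N / (real N + 1) ^ j"
    unfolding Q_def power_Suc by (subst mult.commute) (rule mult_divide_mult_cancel_left, simp)
  have h: "(Q N - 1) * (1 / x) + 1 / x = Q N / x" for x :: real by (cases "x = 0") (simp_all add: field_simps)
  have "(Q N - 1) * G N (Suc j) + 1 / (real N + 1) ^ Suc j
      = real N * ((Q N - 1) * G N j) + ((Q N - 1) * (1 / (real N + 1) ^ Suc j) + 1 / (real N + 1) ^ Suc j)"
    unfolding G_Suc by (simp add: algebra_simps)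
  also have "\<dots> = real N * ((Q N - 1) * G N j) + Q N / (real N + 1) ^ Suc j" by (simp only: h)
  finally have "(Q N - 1) * G N (Suc j) + 1 / (real N + 1) ^ Suc j
      = real N * ((Q N - 1) * G N j) + Q N / (real N + 1) ^ Suc j" .
  also have "\<dots> = real N * ((Q N - 1) * G N j + 1 / (real N + 1) ^ j)"
    unfolding e by (simp add: algebra_simps)
  also have "\<dots> = Q N * real N ^ Suc j" using Suc by simp
  finally show ?case .
qed

lemma avg_eq: "N \<ge> 1 \<Longrightarrow> g (m - 1) = g m \<Longrightarrow> avg N g m = g m"
  unfolding avg_def using Q_pos[of N] by (simp add: field_simps)

lemma avg_one: "avg N g 1 = (g 0 + (Q N - 1) * g 1) / Q N"
  unfolding avg_def by simp

lemma binom_term: "i \<le> j \<Longrightarrow> real (j choose i) * mu N i * (fact (j - i) * real N ^ (j - i)) = fact j * (real N ^ (j - i) / (real N + 1) ^ i)"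
proof -
  assume ij: "i \<le> j"
  have "real (fact i * fact (j - i) * (j choose i)) = real (fact j)" using binomial_fact_lemma[OF ij] by simp
  then have "fact i * fact (j - i) * real (j choose i) = (fact j :: real)" by (simp add: of_nat_mult)
  then show ?thesis unfolding mu_def by (simp add: field_simps)
qed

lemma V_ident1:
  assumes N: "N \<ge> 1"
  shows "(\<Sum>i\<le>j. real (j choose i) * mu N i * avg N (Vl N (j - i)) 1) = Vl N j 1"
proof -
  have Qp: "Q N > 0" using Q_pos[OF N] .
  have "(\<Sum>i\<le>j. real (j choose i) * mu N i * avg N (Vl N (j - i)) 1)
      = (\<Sum>i\<le>j. (if i = j then mu N j / Q N else 0) + (Q N - 1) / Q N * (fact j * (real N ^ (j - i) / (real N + 1) ^ i)))"
  proof (rule sum.cong[OF refl])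
    fix i assume "i \<in> {..j}"
    then have ij: "i \<le> j" by simp
    have a: "avg N (Vl N (j - i)) 1 = ((if i = j then 1 else 0) + (Q N - 1) * (fact (j - i) * real N ^ (j - i))) / Q N"
      unfolding avg_one Vl_def using ij by auto
    have b: "real (j choose i) * mu N i * (fact (j - i) * real N ^ (j - i)) = fact j * (real N ^ (j - i) / (real N + 1) ^ i)"
      by (rule binom_term[OF ij])
    have c: "real (j choose i) * mu N i * (if i = j then 1 else 0) = (if i = j then mu N j else 0)" by auto
    have "real (j choose i) * mu N i * avg N (Vl N (j - i)) 1
      = (real (j choose i) * mu N i * (if i = j then 1 else 0)) / Q N + (Q N - 1) / Q N * (real (j choose i) * mu N i * (fact (j - i) * real N ^ (j - i)))"
      unfolding a using Qp by (simp add: field_simps)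
    then show "real (j choose i) * mu N i * avg N (Vl N (j - i)) 1
      = (if i = j then mu N j / Q N else 0) + (Q N - 1) / Q N * (fact j * (real N ^ (j - i) / (real N + 1) ^ i))"
      unfolding b c by simp
  qed
  also have "\<dots> = mu N j / Q N + (Q N - 1) / Q N * fact j * G N j"
    by (simp add: sum.distrib sum_distrib_left G_def mult.assoc)
  also have "\<dots> = fact j / Q N * ((Q N - 1) * G N j + 1 / (real N + 1) ^ j)"
  proof -
    have p: "(real N + 1) ^ j > 0" by simp
    show ?thesis unfolding mu_def using Qp p by (simp add: field_simps)
  qed
  also have "\<dots> = fact j * real N ^ j" using G_ident[OF N, of j] Qp by simp
  finally show ?thesis unfolding Vl_def by simp
qed

lemma V_ident2:
  assumes N: "N \<ge> 1" and m: "m \<ge> 2"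
  shows "avg N (Vl N j) m = Vl N j m"
  using m by (intro avg_eq[OF N]) (simp add: Vl_def)

lemma vv_le: "N \<ge> 1 \<Longrightarrow> m \<le> N \<Longrightarrow> vv N n j m \<le> Vl N j m"
proof (induction n arbitrary: j m)
  case 0 then show ?case by (simp add: Vl_def)
next
  case (Suc n)
  note N = Suc.prems(1)
  consider "m = 0" | "m = 1" | "m \<ge> 2" by linarith
  then show ?case
  proof cases
    case 1 then show ?thesis by (simp add: Vl_def)
  next
    case 2
    have "vv N (Suc n) j m = (\<Sum>i\<le>j. real (j choose i) * mu N i * avg N (vv N n (j - i)) 1)" using 2 by simp
    also have "\<dots> \<le> (\<Sum>i\<le>j. real (j choose i) * mu N i * avg N (Vl N (j - i)) 1)"
    proof (rule sum_mono)
      fix i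
      have "avg N (vv N n (j - i)) 1 \<le> avg N (Vl N (j - i)) 1"
        using Suc.IH[OF N] Suc.prems N by (intro avg_mono) auto
      then show "real (j choose i) * mu N i * avg N (vv N n (j - i)) 1 \<le> real (j choose i) * mu N i * avg N (Vl N (j - i)) 1"
        by (intro mult_left_mono) (auto simp: mu_nonneg)
    qed
    also have "\<dots> = Vl N j m" using V_ident1[OF N] 2 by simp
    finally show ?thesis .
  next
    case 3
    have "vv N (Suc n) j m = avg N (vv N n j) m" using 3 by simp
    also have "\<dots> \<le> avg N (Vl N j) m" using Suc.IH[OF N] Suc.prems N by (intro avg_mono) auto
    also have "\<dots> = Vl N j m" by (rule V_ident2[OF N 3])
    finally show ?thesis .
  qed
qed

lemma vv_one: "vv N (Suc n) j 1 = (\<Sum>i\<le>j. real (j choose i) * mu N i * avg N (vv N n (j - i)) 1)" by simp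
lemma vv_ge2: "m \<ge> 2 \<Longrightarrow> vv N (Suc n) j m = avg N (vv N n j) m" by simp

lemma vv0_fun: "vv N 0 j = (\<lambda>_. if j = 0 then 1 else 0)" by (rule ext) simp

lemma vv_mono: "N \<ge> 1 \<Longrightarrow> m \<le> N \<Longrightarrow> vv N n j m \<le> vv N (Suc n) j m"
proof (induction n arbitrary: j m)
  case 0
  note N = 0(1)
  consider "m = 0" | "m = 1" | "m \<ge> 2" by linarith
  then show ?case
  proof cases
    case 1 then show ?thesis by simp
  next
    case 2
    show ?thesis
    proof (cases "j = 0")
      case True then show ?thesis using 2 by (simp add: vv0_fun avg_const[OF N] mu_def)
    next
      case False then show ?thesis using vv_nonneg[OF N, of m "Suc 0" j] 0 by simp
    qed
  next
    case 3
    then show ?thesis by (simp add: avg_const[OF N] vv0_fun)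
  qed
next
  case (Suc n)
  note N = Suc.prems(1)
  consider "m = 0" | "m = 1" | "m \<ge> 2" by linarith
  then show ?case
  proof cases
    case 1 then show ?thesis by simp
  next
    case 2
    have "(\<Sum>i\<le>j. real (j choose i) * mu N i * avg N (vv N n (j - i)) 1) \<le> (\<Sum>i\<le>j. real (j choose i) * mu N i * avg N (vv N (Suc n) (j - i)) 1)"
    proof (rule sum_mono)
      fix i
      have "avg N (vv N n (j - i)) 1 \<le> avg N (vv N (Suc n) (j - i)) 1"
        by (intro avg_mono Suc.IH[OF N]) (use N in auto)
      then show "real (j choose i) * mu N i * avg N (vv N n (j - i)) 1 \<le> real (j choose i) * mu N i * avg N (vv N (Suc n) (j - i)) 1"
        by (intro mult_left_mono) (auto simp: mu_nonneg)
    qed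
    then show ?thesis unfolding 2 vv_one[of N n] vv_one[of N "Suc n"] .
  next
    case 3
    have "avg N (vv N n j) m \<le> avg N (vv N (Suc n) j) m" by (intro avg_mono Suc.IH[OF N]) (use N Suc.prems in auto)
    then show ?thesis unfolding vv_ge2[OF 3, of N n] vv_ge2[OF 3, of N "Suc n"] .
  qed
qed


lemma Hs_ge1: "m \<ge> 1 \<Longrightarrow> Hs m \<ge> 1"
proof (induction m)
  case 0 then show ?case by simp
next
  case (Suc m)
  show ?case
  proof (cases "m = 0")
    case True then show ?thesis by (simp add: Hs_def)
  next
    case False
    have a: "0 \<le> 1 / (real m + 1)^2" by simp
    have b: "1 \<le> Hs m" using Suc.IH False by simp
    show ?thesis unfolding Hs_Suc using a b by linarith
  qed
qed

lemma Wl_nonneg: "0 \<le> Wl N j m"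
  unfolding Wl_def using Hs_ge1[of m] by auto

lemma Wl_one: "Wl N j 1 = Vl N (j + 1) 1"
  unfolding Wl_def Vl_def Hs_def by simp

lemma Wl_diff:
  assumes m: "m \<ge> 2"
  shows "Wl N j m = Wl N j (m - 1) + real N * (fact j * real N ^ j) / (real m)^2"
proof -
  obtain k where k: "m = Suc k" "k \<ge> 1" using m by (cases m) auto
  have "Hs m = Hs k + 1 / (real m)^2" unfolding k(1) Hs_Suc by simp
  then show ?thesis unfolding Wl_def using k by (simp add: algebra_simps)
qed

lemma W_ident:
  assumes N: "N \<ge> 1" and m: "m \<ge> 2"
  shows "mu N 1 * Vl N j m + avg N (Wl N j) m = Wl N j m"
proof -
  let ?D = "real N * (fact j * real N ^ j)"
  have Qp: "Q N > 0" using Q_pos[OF N] .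
  have mp: "(real m)^2 > 0" using m by simp
  have "avg N (Wl N j) m = ((real m)^2 * (Wl N j m - ?D / (real m)^2) + (Q N - (real m)^2) * Wl N j m) / Q N"
    unfolding avg_def using Wl_diff[OF m, of N j] by simp
  also have "\<dots> = Wl N j m - ?D / Q N" using Qp mp by (simp add: field_simps)
  also have "?D / Q N = mu N 1 * Vl N j m"
  proof -
    have "real N > 0" using N by simp
    then have "real N + real N * real N > 0" by (intro add_pos_nonneg) auto
    then show ?thesis using m by (simp add: Q_def mu_def Vl_def field_simps)
  qed
  finally show ?thesis by simp
qed

lemma ww_one: "ww N n j 1 = vv N n (j + 1) 1" by (cases n) auto
lemma ww_ge2: "m \<ge> 2 \<Longrightarrow> ww N (Suc n) j m = mu N 1 * avg N (vv N n j) m + avg N (ww N n j) m" by simp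

lemma ww_le: "N \<ge> 1 \<Longrightarrow> m \<le> N \<Longrightarrow> ww N n j m \<le> Wl N j m"
proof (induction n arbitrary: m)
  case 0 then show ?case by (simp add: Wl_nonneg)
next
  case (Suc n)
  note N = Suc.prems(1)
  consider "m = 0" | "m = 1" | "m \<ge> 2" by linarith
  then show ?case
  proof cases
    case 1 then show ?thesis by (simp add: Wl_def)
  next
    case 2 show ?thesis unfolding 2 ww_one Wl_one by (rule vv_le[OF N]) (use N in simp)
  next
    case 3
    have "avg N (vv N n j) m \<le> avg N (Vl N j) m" using vv_le[OF N] N Suc.prems by (intro avg_mono) auto
    moreover have "avg N (ww N n j) m \<le> avg N (Wl N j) m" using Suc.IH[OF N] N Suc.prems by (intro avg_mono) auto
    ultimately have "mu N 1 * avg N (vv N n j) m + avg N (ww N n j) m \<le> mu N 1 * avg N (Vl N j) m + avg N (Wl N j) m"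
      by (intro add_mono mult_left_mono) (auto simp: mu_nonneg)
    also have "\<dots> = Wl N j m" using V_ident2[OF N 3] W_ident[OF N 3] by simp
    finally show ?thesis unfolding ww_ge2[OF 3] .
  qed
qed

lemma ww_mono: "N \<ge> 1 \<Longrightarrow> m \<le> N \<Longrightarrow> ww N n j m \<le> ww N (Suc n) j m"
proof (induction n arbitrary: m)
  case 0 then show ?case using ww_nonneg[of N m "Suc 0" j] by simp
next
  case (Suc n)
  note N = Suc.prems(1)
  consider "m = 0" | "m = 1" | "m \<ge> 2" by linarith
  then show ?case
  proof cases
    case 1 then show ?thesis by simp
  next
    case 2 show ?thesis unfolding 2 ww_one by (rule vv_mono[OF N]) (use N in simp)
  next
    case 3
    have "avg N (vv N n j) m \<le> avg N (vv N (Suc n) j) m" by (intro avg_mono vv_mono[OF N]) (use N Suc.prems in auto)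
    moreover have "avg N (ww N n j) m \<le> avg N (ww N (Suc n) j) m" by (intro avg_mono Suc.IH[OF N]) (use N Suc.prems in auto)
    ultimately have "mu N 1 * avg N (vv N n j) m + avg N (ww N n j) m \<le> mu N 1 * avg N (vv N (Suc n) j) m + avg N (ww N (Suc n) j) m"
      by (intro add_mono mult_left_mono) (auto simp: mu_nonneg)
    then show ?thesis unfolding ww_ge2[OF 3, of N n] ww_ge2[OF 3, of N "Suc n"] .
  qed
qed


definition Lv :: "nat \<Rightarrow> nat \<Rightarrow> nat \<Rightarrow> real" where "Lv N j m = lim (\<lambda>n. vv N n j m)"
definition Lw :: "nat \<Rightarrow> nat \<Rightarrow> nat \<Rightarrow> real" where "Lw N j m = lim (\<lambda>n. ww N n j m)"

lemma vv_inc: "N \<ge> 1 \<Longrightarrow> m \<le> N \<Longrightarrow> incseq (\<lambda>n. vv N n j m)"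
  by (intro incseq_SucI vv_mono)
lemma ww_inc: "N \<ge> 1 \<Longrightarrow> m \<le> N \<Longrightarrow> incseq (\<lambda>n. ww N n j m)"
  by (intro incseq_SucI ww_mono)

lemma vv_conv: assumes "N \<ge> 1" "m \<le> N" shows "(\<lambda>n. vv N n j m) \<longlonglongrightarrow> Lv N j m"
proof -
  have b: "\<forall>i. vv N i j m \<le> Vl N j m" using vv_le[OF assms] by blast
  obtain L where "(\<lambda>n. vv N n j m) \<longlonglongrightarrow> L" "\<forall>i. vv N i j m \<le> L"
    by (rule incseq_convergent[OF vv_inc[OF assms] b])
  then show ?thesis unfolding Lv_def by (simp add: limI)
qed

lemma ww_conv: assumes "N \<ge> 1" "m \<le> N" shows "(\<lambda>n. ww N n j m) \<longlonglongrightarrow> Lw N j m"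
proof -
  have b: "\<forall>i. ww N i j m \<le> Wl N j m" using ww_le[OF assms] by blast
  obtain L where "(\<lambda>n. ww N n j m) \<longlonglongrightarrow> L" "\<forall>i. ww N i j m \<le> L"
    by (rule incseq_convergent[OF ww_inc[OF assms] b])
  then show ?thesis unfolding Lw_def by (simp add: limI)
qed

lemma avg_tendsto:
  assumes "(\<lambda>n. f n (m - 1)) \<longlonglongrightarrow> a (m - 1)" "(\<lambda>n. f n m) \<longlonglongrightarrow> a m"
  shows "(\<lambda>n. avg N (f n) m) \<longlonglongrightarrow> avg N a m"
  unfolding avg_def divide_inverse by (intro tendsto_intros assms)

lemma Lv0: "N \<ge> 1 \<Longrightarrow> Lv N j 0 = Vl N j 0"
proof -
  assume N: "N \<ge> 1"
  have "(\<lambda>n. vv N n j 0) = (\<lambda>n. if j = 0 then 1 else 0)" by (rule ext, case_tac n) auto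
  then show ?thesis unfolding Lv_def Vl_def by simp
qed

lemma Lv1: assumes N: "N \<ge> 1" shows "Lv N j 1 = Vl N j 1"
proof (induction j rule: less_induct)
  case (less j)
  have Qp: "Q N > 0" using Q_pos[OF N] .
  have A: "(\<lambda>n. vv N (Suc n) j 1) \<longlonglongrightarrow> Lv N j 1"
    using LIMSEQ_Suc[OF vv_conv[OF N, of 1 j]] N by simp
  have B: "(\<lambda>n. vv N (Suc n) j 1) \<longlonglongrightarrow> (\<Sum>i\<le>j. real (j choose i) * mu N i * avg N (Lv N (j - i)) 1)"
    unfolding vv_one
    by (intro tendsto_intros avg_tendsto vv_conv) (use N in auto)
  have eq: "Lv N j 1 = (\<Sum>i\<le>j. real (j choose i) * mu N i * avg N (Lv N (j - i)) 1)"
    using LIMSEQ_unique[OF A B] .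
  let ?f = "\<lambda>i. real (j choose i) * mu N i * avg N (Lv N (j - i)) 1"
  let ?g = "\<lambda>i. real (j choose i) * mu N i * avg N (Vl N (j - i)) 1"
  have rest: "\<And>i. i \<in> {..j} - {0} \<Longrightarrow> ?f i - ?g i = 0"
  proof -
    fix i assume i: "i \<in> {..j} - {0}"
    then have "j - i < j" by auto
    then have "Lv N (j - i) 1 = Vl N (j - i) 1" by (rule less.IH)
    moreover have "Lv N (j - i) 0 = Vl N (j - i) 0" by (rule Lv0[OF N])
    ultimately show "?f i - ?g i = 0" by (simp add: avg_def)
  qed
  have "(\<Sum>i\<le>j. ?f i) - (\<Sum>i\<le>j. ?g i) = (\<Sum>i\<le>j. ?f i - ?g i)" by (simp add: sum_subtractf)
  also have "\<dots> = (?f 0 - ?g 0) + (\<Sum>i\<in>{..j} - {0}. ?f i - ?g i)" by (subst sum.remove[of _ 0]) auto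
  also have "\<dots> = ?f 0 - ?g 0"
  proof -
    have z: "(\<Sum>i\<in>{..j} - {0}. ?f i - ?g i) = 0" using rest by (intro sum.neutral) blast
    show ?thesis by (simp only: z add_0_right)
  qed
  also have "\<dots> = (Q N - 1) / Q N * (Lv N j 1 - Vl N j 1)"
    using Lv0[OF N, of j] Qp by (simp add: avg_def mu_def field_simps)
  finally have "Lv N j 1 - Vl N j 1 = (Q N - 1) / Q N * (Lv N j 1 - Vl N j 1)"
    using eq V_ident1[OF N, of j] by simp
  then have "(Lv N j 1 - Vl N j 1) / Q N = 0" using Qp by (simp add: field_simps)
  then show ?case using Qp by simp
qed

lemma Lv_eq: assumes N: "N \<ge> 1" shows "m \<le> N \<Longrightarrow> Lv N j m = Vl N j m"
proof (induction m)
  case 0 show ?case by (rule Lv0[OF N])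
next
  case (Suc k)
  show ?case
  proof (cases "k = 0")
    case True then show ?thesis using Lv1[OF N] by simp
  next
    case False
    let ?m = "Suc k"
    have m2: "?m \<ge> 2" using False by simp
    have Qp: "Q N > 0" using Q_pos[OF N] .
    have A: "(\<lambda>n. vv N (Suc n) j ?m) \<longlonglongrightarrow> Lv N j ?m"
      using LIMSEQ_Suc[OF vv_conv[OF N Suc.prems]] .
    have B: "(\<lambda>n. vv N (Suc n) j ?m) \<longlonglongrightarrow> avg N (Lv N j) ?m"
      unfolding vv_ge2[OF m2] by (intro avg_tendsto vv_conv) (use N Suc.prems in auto)
    have eq: "Lv N j ?m = avg N (Lv N j) ?m" using LIMSEQ_unique[OF A B] .
    have prev: "Lv N j k = Vl N j ?m" using Suc.IH Suc.prems False by (simp add: Vl_def)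
    have "Q N * Lv N j ?m = (real ?m)^2 * Vl N j ?m + (Q N - (real ?m)^2) * Lv N j ?m"
      using eq prev Qp unfolding avg_def by (simp add: field_simps)
    then have "(real ?m)^2 * Lv N j ?m = (real ?m)^2 * Vl N j ?m" by (simp add: algebra_simps)
    then show ?thesis by simp
  qed
qed

lemma Lw_eq: assumes N: "N \<ge> 1" shows "m \<le> N \<Longrightarrow> Lw N j m = Wl N j m"
proof (induction m)
  case 0
  have "(\<lambda>n. ww N n j 0) = (\<lambda>n. 0)" by (rule ext, case_tac n) auto
  then show ?case unfolding Lw_def Wl_def by simp
next
  case (Suc k)
  show ?case
  proof (cases "k = 0")
    case True
    have "(\<lambda>n. ww N n j 1) \<longlonglongrightarrow> Vl N (j + 1) 1"
      unfolding ww_one using vv_conv[OF N, of 1 "j+1"] Lv1[OF N, of "j+1"] N by simp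
    moreover have "(\<lambda>n. ww N n j 1) \<longlonglongrightarrow> Lw N j 1" using ww_conv[OF N, of 1 j] N by simp
    ultimately show ?thesis using True Wl_one LIMSEQ_unique by (metis One_nat_def)
  next
    case False
    let ?m = "Suc k"
    have m2: "?m \<ge> 2" using False by simp
    have Qp: "Q N > 0" using Q_pos[OF N] .
    have A: "(\<lambda>n. ww N (Suc n) j ?m) \<longlonglongrightarrow> Lw N j ?m"
      using LIMSEQ_Suc[OF ww_conv[OF N Suc.prems]] .
    have B: "(\<lambda>n. ww N (Suc n) j ?m) \<longlonglongrightarrow> mu N 1 * avg N (Lv N j) ?m + avg N (Lw N j) ?m"
      unfolding ww_ge2[OF m2] by (intro tendsto_intros avg_tendsto vv_conv ww_conv) (use N Suc.prems in auto)
    have eq: "Lw N j ?m = mu N 1 * avg N (Lv N j) ?m + avg N (Lw N j) ?m" using LIMSEQ_unique[OF A B] .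
    have av: "avg N (Lv N j) ?m = Vl N j ?m"
    proof -
      have "avg N (Lv N j) ?m = avg N (Vl N j) ?m" unfolding avg_def using Lv_eq[OF N] Suc.prems by simp
      then show ?thesis using V_ident2[OF N m2] by simp
    qed
    have prev: "Lw N j k = Wl N j k" using Suc.IH Suc.prems by simp
    have W: "Wl N j ?m = mu N 1 * Vl N j ?m + avg N (Wl N j) ?m" using W_ident[OF N m2] by simp
    have "Lw N j ?m - Wl N j ?m = avg N (Lw N j) ?m - avg N (Wl N j) ?m" using eq av W by simp
    also have "\<dots> = (Q N - (real ?m)^2) / Q N * (Lw N j ?m - Wl N j ?m)"
      unfolding avg_def using prev Qp by (simp add: field_simps)
    finally have "(real ?m)^2 / Q N * (Lw N j ?m - Wl N j ?m) = 0" using Qp by (simp add: field_simps)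
    then show ?thesis using Qp by simp
  qed
qed


lemma AE_fst_nonneg: "AE \<omega> in dsf_space N. \<forall>k. 0 \<le> fst (\<omega> k)"
proof -
  have ea: "AE a in EA N. 0 \<le> a"
    unfolding EA_def by (subst AE_density) (auto simp: exponential_density_def split: if_splits)
  interpret P: pair_sigma_finite "EA N" "PM N"
    using prob_EA prob_PM by (simp add: pair_sigma_finite_def prob_space_imp_sigma_finite)
  have "AE x in EA N \<Otimes>\<^sub>M PM N. 0 \<le> fst x"
    by (rule P.AE_pair_measure) (use ea in auto)
  then have st: "AE x in dsf_step_measure N. 0 \<le> fst x" unfolding step_measure_eq .
  have "AE \<omega> in dsf_space N. 0 \<le> fst (\<omega> k)" for k
    unfolding dsf_space_def
    by (rule AE_PiM_component[where I=UNIV and M="\<lambda>_. dsf_step_measure N"]) (simp_all add: prob_M st)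
  then show ?thesis by (simp add: AE_all_countable)
qed

lemma Cf_inc: "incseq (\<lambda>n \<omega>. Cf N c n \<omega>)"
  by (intro incseq_SucI le_funI) (simp add: Cf_def)
lemma Tf_inc: "incseq (\<lambda>n \<omega>. Tf N c n \<omega>)"
  by (intro incseq_SucI le_funI) (simp add: Tf_def)
lemma tf_inc: "incseq (\<lambda>n \<omega>. tf N c n \<omega>)"
  by (intro incseq_SucI le_funI) (simp add: tf_def)

lemma AE_halts:
  assumes N: "N \<ge> 1" and c: "dsf_valid N c"
  shows "AE \<omega> in dsf_space N. \<exists>k. em N (dsf_conf N c \<omega> k) = 0"
proof -
  have "(\<integral>\<^sup>+\<omega>. (SUP n. Cf N c n \<omega>) \<partial>dsf_space N) = (SUP n. \<integral>\<^sup>+\<omega>. Cf N c n \<omega> \<partial>dsf_space N)"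
    by (rule nn_integral_monotone_convergence_SUP[OF Cf_inc]) simp
  also have "\<dots> \<le> ennreal (BB N (em N c))"
    by (rule SUP_least) (rule Ec[OF N c])
  finally have "(\<integral>\<^sup>+\<omega>. (SUP n. Cf N c n \<omega>) \<partial>dsf_space N) \<noteq> \<infinity>"
    using ennreal_less_top[of "BB N (em N c)"] by (auto simp: top_unique)
  then have ae: "AE \<omega> in dsf_space N. (SUP n. Cf N c n \<omega>) \<noteq> \<infinity>"
    by (intro nn_integral_PInf_AE) simp_all
  show ?thesis
  proof (rule AE_mp[OF ae], rule AE_I2, rule impI)
    fix \<omega> assume fin: "(SUP n. Cf N c n \<omega>) \<noteq> \<infinity>"
    show "\<exists>k. em N (dsf_conf N c \<omega> k) = 0"
    proof (rule ccontr)
      assume "\<not> (\<exists>k. em N (dsf_conf N c \<omega> k) = 0)"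
      then have "Cf N c n \<omega> = of_nat n" for n unfolding Cf_def by simp
      then have "(SUP n. Cf N c n \<omega>) = \<infinity>" using ennreal_SUP_of_nat_eq_top by simp
      then show False using fin by simp
    qed
  qed
qed

lemma sum_if_less:
  fixes K n :: nat and f :: "nat \<Rightarrow> 'a :: comm_monoid_add"
  assumes "K \<le> n"
  shows "(\<Sum>k<n. if k < K then f k else 0) = (\<Sum>k<K. f k)"
  using assms
proof (induction n rule: dec_induct)
  case base then show ?case by (intro sum.cong) auto
next
  case (step n) then show ?case by simp
qed

lemma SUP_eventually_const:
  fixes f :: "nat \<Rightarrow> 'a :: complete_linorder"
  assumes "incseq f" "\<And>n. n \<ge> K \<Longrightarrow> f n = a"
  shows "(SUP n. f n) = a"
proof (rule antisym)
  show "(SUP n. f n) \<le> a"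
  proof (rule SUP_least)
    fix n
    have "f n \<le> f (max n K)" using assms(1) by (simp add: incseq_def)
    then show "f n \<le> a" using assms(2)[of "max n K"] by simp
  qed
  show "a \<le> (SUP n. f n)" using assms(2)[of K] by (metis SUP_upper UNIV_I order_refl)
qed

context
  fixes N :: nat and c :: dsf_config and \<omega> :: "nat \<Rightarrow> real \<times> nat \<times> nat"
  assumes c: "dsf_valid N c"
    and X: "\<forall>k. 0 \<le> fst (\<omega> k)"
    and H: "\<exists>k. em N (dsf_conf N c \<omega> k) = 0"
begin

definition "K = dsf_halt_index N c \<omega>"

lemma halted_em: "dsf_halted N (dsf_conf N c \<omega> k) \<longleftrightarrow> em N (dsf_conf N c \<omega> k) = 0"
  using halted_iff[OF valid_conf[OF c]] .

lemma K_em: "em N (dsf_conf N c \<omega> k) = 0 \<longleftrightarrow> K \<le> k"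
proof -
  have ex: "\<exists>k. dsf_halted N (dsf_conf N c \<omega> k)" using H halted_em by auto
  have hK: "em N (dsf_conf N c \<omega> K) = 0"
    using LeastI_ex[OF ex] halted_em unfolding K_def dsf_halt_index_def by simp
  show ?thesis
  proof
    assume "em N (dsf_conf N c \<omega> k) = 0"
    then have "dsf_halted N (dsf_conf N c \<omega> k)" using halted_em by simp
    then show "K \<le> k" unfolding K_def dsf_halt_index_def by (rule Least_le)
  next
    assume "K \<le> k"
    then show "em N (dsf_conf N c \<omega> k) = 0" using em_conf_mono[OF c \<open>K \<le> k\<close>, of \<omega>] hK by simp
  qed
qed

lemma Tf_eq: "n \<ge> K \<Longrightarrow> Tf N c n \<omega> = ennreal (dsf_T N c \<omega>)"
proof -
  assume n: "n \<ge> K"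
  have "Tf N c n \<omega> = (\<Sum>k<n. if k < K then ennreal (fst (\<omega> k)) else 0)"
    unfolding Tf_def by (intro sum.cong refl) (simp add: K_em not_le)
  also have "\<dots> = (\<Sum>k<K. ennreal (fst (\<omega> k)))" by (rule sum_if_less[OF n])
  also have "\<dots> = ennreal (dsf_T N c \<omega>)" unfolding dsf_T_def K_def[symmetric] using X by simp
  finally show ?thesis .
qed

lemma tf_eq: "n \<ge> K \<Longrightarrow> tf N c n \<omega> = ennreal (dsf_t N c \<omega>)"
proof -
  assume n: "n \<ge> K"
  have "tf N c n \<omega> = (\<Sum>k<n. if k < K then (if em N (dsf_conf N c \<omega> k) = 1 then ennreal (fst (\<omega> k)) else 0) else 0)"
    unfolding tf_def by (intro sum.cong refl) (auto simp: K_em[symmetric] not_less)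
  also have "\<dots> = (\<Sum>k<K. if em N (dsf_conf N c \<omega> k) = 1 then ennreal (fst (\<omega> k)) else 0)" by (rule sum_if_less[OF n])
  also have "\<dots> = (\<Sum>k<K. ennreal (if em N (dsf_conf N c \<omega> k) = 1 then fst (\<omega> k) else 0))"
    by (intro sum.cong) auto
  also have "\<dots> = ennreal (\<Sum>k<K. if em N (dsf_conf N c \<omega> k) = 1 then fst (\<omega> k) else 0)"
    using X by (intro sum_ennreal) auto
  also have "\<dots> = ennreal (dsf_t N c \<omega>)" unfolding dsf_t_def K_def ..
  finally show ?thesis .
qed

lemma T_nonneg: "0 \<le> dsf_T N c \<omega>" unfolding dsf_T_def using X by (simp add: sum_nonneg)
lemma t_nonneg: "0 \<le> dsf_t N c \<omega>" unfolding dsf_t_def using X by (simp add: sum_nonneg)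

lemma SUP_Tt: "(SUP n. Tf N c n \<omega> * tf N c n \<omega> ^ j) = ennreal (dsf_T N c \<omega> * dsf_t N c \<omega> ^ j)"
proof (rule SUP_eventually_const[where K=K])
  show "incseq (\<lambda>n. Tf N c n \<omega> * tf N c n \<omega> ^ j)"
    using Tf_inc[of N c] tf_inc[of N c]
    by (intro incseq_SucI mult_mono power_mono) (auto simp: incseq_Suc_iff le_fun_def)
  fix n assume "n \<ge> K"
  then show "Tf N c n \<omega> * tf N c n \<omega> ^ j = ennreal (dsf_T N c \<omega> * dsf_t N c \<omega> ^ j)"
    using Tf_eq tf_eq T_nonneg t_nonneg by (simp add: ennreal_mult ennreal_power)
qed

lemma SUP_t: "(SUP n. tf N c n \<omega> ^ j) = ennreal (dsf_t N c \<omega> ^ j)"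
proof (rule SUP_eventually_const[where K=K])
  show "incseq (\<lambda>n. tf N c n \<omega> ^ j)"
    using tf_inc[of N c]
    by (intro incseq_SucI power_mono) (auto simp: incseq_Suc_iff le_fun_def)
  fix n assume "n \<ge> K"
  then show "tf N c n \<omega> ^ j = ennreal (dsf_t N c \<omega> ^ j)"
    using tf_eq t_nonneg by (simp add: ennreal_power)
qed

end


lemma SUP_ennreal_lim:
  assumes "incseq f" "f \<longlonglongrightarrow> L"
  shows "(SUP n. ennreal (f n)) = ennreal L"
proof -
  have inc: "incseq (\<lambda>n. ennreal (f n))" using assms(1) by (auto simp: incseq_def intro: ennreal_leI)
  have "(\<lambda>n. ennreal (f n)) \<longlonglongrightarrow> (SUP n. ennreal (f n))" by (rule LIMSEQ_SUP[OF inc])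
  moreover have "(\<lambda>n. ennreal (f n)) \<longlonglongrightarrow> ennreal L" using assms(2) by (rule tendsto_ennrealI)
  ultimately show ?thesis by (rule LIMSEQ_unique)
qed

lemma meas_halt[measurable]: "(\<lambda>\<omega>. dsf_halt_index N c \<omega>) \<in> dsf_space N \<rightarrow>\<^sub>M count_space UNIV"
  unfolding dsf_halt_index_def by measurable

lemma meas_T[measurable]: "(\<lambda>\<omega>. dsf_T N c \<omega>) \<in> borel_measurable (dsf_space N)"
  unfolding dsf_T_def
  by (rule measurable_compose_countable[where f="\<lambda>i \<omega>. \<Sum>k<i. fst (\<omega> k)", OF _ meas_halt]) measurable

lemma meas_t_term: "(\<lambda>\<omega>. if em N (dsf_conf N c \<omega> k) = 1 then fst (\<omega> k) else 0) \<in> borel_measurable (dsf_space N)"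
proof -
  have p: "{\<omega>\<in>space (dsf_space N). em N (dsf_conf N c \<omega> k) = 1} \<in> sets (dsf_space N)"
    by (rule predE[OF pred_conf])
  show ?thesis by (rule measurable_If[OF meas_fst borel_measurable_const p])
qed

lemma meas_t[measurable]: "(\<lambda>\<omega>. dsf_t N c \<omega>) \<in> borel_measurable (dsf_space N)"
  unfolding dsf_t_def
  by (rule measurable_compose_countable[where f="\<lambda>i \<omega>. \<Sum>k<i. if em N (dsf_conf N c \<omega> k) = 1 then fst (\<omega> k) else 0", OF _ meas_halt])
     (rule borel_measurable_sum, rule meas_t_term)

lemma AE_good:
  assumes N: "N \<ge> 1" and c: "dsf_valid N c"
  shows "AE \<omega> in dsf_space N. (\<forall>k. 0 \<le> fst (\<omega> k)) \<and> (\<exists>k. em N (dsf_conf N c \<omega> k) = 0)"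
  using AE_fst_nonneg[of N] AE_halts[OF N c] by eventually_elim auto

lemma nn_Tt:
  assumes N: "N \<ge> 1" and c: "dsf_valid N c"
  shows "(\<integral>\<^sup>+\<omega>. ennreal (dsf_T N c \<omega> * dsf_t N c \<omega> ^ j) \<partial>dsf_space N) = ennreal (Wl N j (em N c))"
proof -
  have "(\<integral>\<^sup>+\<omega>. ennreal (dsf_T N c \<omega> * dsf_t N c \<omega> ^ j) \<partial>dsf_space N) = (\<integral>\<^sup>+\<omega>. (SUP n. Tf N c n \<omega> * tf N c n \<omega> ^ j) \<partial>dsf_space N)"
    using AE_good[OF N c] by (intro nn_integral_cong_AE) (auto simp: SUP_Tt[OF c])
  also have "\<dots> = (SUP n. \<integral>\<^sup>+\<omega>. Tf N c n \<omega> * tf N c n \<omega> ^ j \<partial>dsf_space N)"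
  proof (rule nn_integral_monotone_convergence_SUP)
    show "incseq (\<lambda>n \<omega>. Tf N c n \<omega> * tf N c n \<omega> ^ j)"
      using Tf_inc[of N c] tf_inc[of N c]
      by (intro incseq_SucI le_funI mult_mono power_mono) (auto simp: incseq_Suc_iff le_fun_def)
  qed simp
  also have "\<dots> = (SUP n. ennreal (ww N n j (em N c)))" by (simp add: Ew[OF N c])
  also have "\<dots> = ennreal (Lw N j (em N c))"
    using ww_inc[OF N em_le[OF c]] ww_conv[OF N em_le[OF c]] by (rule SUP_ennreal_lim)
  also have "\<dots> = ennreal (Wl N j (em N c))" using Lw_eq[OF N em_le[OF c]] by simp
  finally show ?thesis .
qed

lemma nn_t:
  assumes N: "N \<ge> 1" and c: "dsf_valid N c"
  shows "(\<integral>\<^sup>+\<omega>. ennreal (dsf_t N c \<omega> ^ j) \<partial>dsf_space N) = ennreal (Vl N j (em N c))"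
proof -
  have "(\<integral>\<^sup>+\<omega>. ennreal (dsf_t N c \<omega> ^ j) \<partial>dsf_space N) = (\<integral>\<^sup>+\<omega>. (SUP n. tf N c n \<omega> ^ j) \<partial>dsf_space N)"
    using AE_good[OF N c] by (intro nn_integral_cong_AE) (auto simp: SUP_t[OF c])
  also have "\<dots> = (SUP n. \<integral>\<^sup>+\<omega>. tf N c n \<omega> ^ j \<partial>dsf_space N)"
  proof (rule nn_integral_monotone_convergence_SUP)
    show "incseq (\<lambda>n \<omega>. tf N c n \<omega> ^ j)"
      using tf_inc[of N c]
      by (intro incseq_SucI le_funI power_mono) (auto simp: incseq_Suc_iff le_fun_def)
  qed simp
  also have "\<dots> = (SUP n. ennreal (vv N n j (em N c)))" by (simp add: Ev[OF N c])
  also have "\<dots> = ennreal (Lv N j (em N c))"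
    using vv_inc[OF N em_le[OF c]] vv_conv[OF N em_le[OF c]] by (rule SUP_ennreal_lim)
  also have "\<dots> = ennreal (Vl N j (em N c))" using Lv_eq[OF N em_le[OF c]] by simp
  finally show ?thesis .
qed

lemma int_Tt:
  assumes N: "N \<ge> 1" and c: "dsf_valid N c"
  shows "(\<integral>\<omega>. dsf_T N c \<omega> * dsf_t N c \<omega> ^ j \<partial>dsf_space N) = Wl N j (em N c)"
proof -
  have "AE \<omega> in dsf_space N. 0 \<le> dsf_T N c \<omega> * dsf_t N c \<omega> ^ j"
    using AE_good[OF N c] by eventually_elim (auto intro!: mult_nonneg_nonneg zero_le_power T_nonneg[OF c] t_nonneg[OF c])
  then have "(\<integral>\<omega>. dsf_T N c \<omega> * dsf_t N c \<omega> ^ j \<partial>dsf_space N) = enn2real (\<integral>\<^sup>+\<omega>. ennreal (dsf_T N c \<omega> * dsf_t N c \<omega> ^ j) \<partial>dsf_space N)"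
    by (intro integral_eq_nn_integral) simp_all
  then show ?thesis using nn_Tt[OF N c] Wl_nonneg by simp
qed

lemma int_t:
  assumes N: "N \<ge> 1" and c: "dsf_valid N c"
  shows "(\<integral>\<omega>. dsf_t N c \<omega> ^ j \<partial>dsf_space N) = Vl N j (em N c)"
proof -
  have "AE \<omega> in dsf_space N. 0 \<le> dsf_t N c \<omega> ^ j"
    using AE_good[OF N c] by eventually_elim (auto intro!: zero_le_power t_nonneg[OF c])
  then have "(\<integral>\<omega>. dsf_t N c \<omega> ^ j \<partial>dsf_space N) = enn2real (\<integral>\<^sup>+\<omega>. ennreal (dsf_t N c \<omega> ^ j) \<partial>dsf_space N)"
    by (intro integral_eq_nn_integral) simp_all
  moreover have "0 \<le> Vl N j (em N c)" by (simp add: Vl_def)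
  ultimately show ?thesis using nn_t[OF N c] by simp
qed


lemma Hs_lim: "(\<lambda>m. Hs m) \<longlonglongrightarrow> pi\<^sup>2 / 6"
  using inverse_squares_sums unfolding sums_def Hs_def by (simp add: add.commute)

theorem mainTheorem8:
  fixes m0 :: "nat \<Rightarrow> nat" and c :: "nat \<Rightarrow> dsf_config" and p :: nat
  assumes valid: "\<And>N. dsf_valid N (c N)"
    and empty: "\<And>N. dsf_empty_count N (c N) = m0 N"
    and m0_inf: "filterlim m0 at_top sequentially"
    and p: "p \<ge> 1"
  shows "((\<lambda>N. (\<integral>\<omega>. dsf_T N (c N) \<omega> * dsf_t N (c N) \<omega> ^ p \<partial>dsf_space N) / real N ^ (p + 1))
           \<longlonglongrightarrow> fact p * pi\<^sup>2 / 6 + real p * fact p)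
       \<and> ((\<lambda>N. (\<integral>\<omega>. dsf_T N (c N) \<omega> \<partial>dsf_space N) * (\<integral>\<omega>. dsf_t N (c N) \<omega> ^ p \<partial>dsf_space N)
              / real N ^ (p + 1))
           \<longlonglongrightarrow> fact p * pi\<^sup>2 / 6)"
proof -
  have ev1: "eventually (\<lambda>N. 1 \<le> m0 N) sequentially" using m0_inf by (simp add: filterlim_at_top)
  have ev2: "eventually (\<lambda>N. 1 \<le> N) sequentially" by (rule eventually_ge_at_top)
  have ev: "eventually (\<lambda>N. 1 \<le> N \<and> 1 \<le> m0 N) sequentially" using ev1 ev2 by eventually_elim auto
  have Hm: "(\<lambda>N. Hs (m0 N)) \<longlonglongrightarrow> pi\<^sup>2 / 6"
    using filterlim_compose[OF Hs_lim m0_inf] by simp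
  have fs: "fact (p + 1) = real (p + 1) * fact p" by simp
  have e1: "eventually (\<lambda>N. (Hs (m0 N) - 1) * fact p + fact (p + 1) =
      (\<integral>\<omega>. dsf_T N (c N) \<omega> * dsf_t N (c N) \<omega> ^ p \<partial>dsf_space N) / real N ^ (p + 1)) sequentially"
    using ev
  proof eventually_elim
    case (elim N)
    then have N: "N \<ge> 1" and m: "m0 N \<ge> 1" by auto
    have Np: "real N > 0" using N by simp
    have "(\<integral>\<omega>. dsf_T N (c N) \<omega> * dsf_t N (c N) \<omega> ^ p \<partial>dsf_space N) = Wl N p (m0 N)"
      using int_Tt[OF N valid[of N], of p] empty[of N] by simp
    also have "\<dots> = real N * (Hs (m0 N) - 1) * (fact p * real N ^ p) + fact (p + 1) * real N ^ (p + 1)"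
      using m by (simp add: Wl_def)
    finally show ?case using Np by (simp add: field_simps)
  qed
  have e2: "eventually (\<lambda>N. Hs (m0 N) * fact p =
      (\<integral>\<omega>. dsf_T N (c N) \<omega> \<partial>dsf_space N) * (\<integral>\<omega>. dsf_t N (c N) \<omega> ^ p \<partial>dsf_space N) / real N ^ (p + 1)) sequentially"
    using ev
  proof eventually_elim
    case (elim N)
    then have N: "N \<ge> 1" and m: "m0 N \<ge> 1" by auto
    have Np: "real N > 0" using N by simp
    have "(\<integral>\<omega>. dsf_T N (c N) \<omega> \<partial>dsf_space N) = Wl N 0 (m0 N)"
      using int_Tt[OF N valid[of N], of 0] empty[of N] by simp
    also have "\<dots> = real N * Hs (m0 N)"
      using m by (simp add: Wl_def algebra_simps)
    finally have A: "(\<integral>\<omega>. dsf_T N (c N) \<omega> \<partial>dsf_space N) = real N * Hs (m0 N)" .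
    have "(\<integral>\<omega>. dsf_t N (c N) \<omega> ^ p \<partial>dsf_space N) = Vl N p (m0 N)"
      using int_t[OF N valid[of N], of p] empty[of N] by simp
    also have "\<dots> = fact p * real N ^ p" using m by (simp add: Vl_def)
    finally have B: "(\<integral>\<omega>. dsf_t N (c N) \<omega> ^ p \<partial>dsf_space N) = fact p * real N ^ p" .
    show ?case unfolding A B using Np by (simp add: field_simps)
  qed
  have l1: "(\<lambda>N. (Hs (m0 N) - 1) * fact p + fact (p + 1)) \<longlonglongrightarrow> (pi\<^sup>2 / 6 - 1) * fact p + fact (p + 1)"
    by (intro tendsto_intros Hm)
  have l2: "(\<lambda>N. Hs (m0 N) * fact p) \<longlonglongrightarrow> pi\<^sup>2 / 6 * fact p"
    by (intro tendsto_intros Hm)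
  have r1: "(pi\<^sup>2 / 6 - 1) * fact p + fact (p + 1) = fact p * pi\<^sup>2 / 6 + real p * fact p"
    unfolding fs by (simp add: algebra_simps)
  have r2: "pi\<^sup>2 / 6 * fact p = fact p * pi\<^sup>2 / 6" by simp
  have A: "(\<lambda>N. (\<integral>\<omega>. dsf_T N (c N) \<omega> * dsf_t N (c N) \<omega> ^ p \<partial>dsf_space N) / real N ^ (p + 1))
           \<longlonglongrightarrow> fact p * pi\<^sup>2 / 6 + real p * fact p"
    using Lim_transform_eventually[OF l1 e1] unfolding r1 .
  have B: "(\<lambda>N. (\<integral>\<omega>. dsf_T N (c N) \<omega> \<partial>dsf_space N) * (\<integral>\<omega>. dsf_t N (c N) \<omega> ^ p \<partial>dsf_space N)
              / real N ^ (p + 1)) \<longlonglongrightarrow> fact p * pi\<^sup>2 / 6"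
    using Lim_transform_eventually[OF l2 e2] unfolding r2 .
  show ?thesis using A B by (rule conjI)
qed


end
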